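(* Let $F$ be a $4$-regular graph, let $E\subseteq E(F)$ be based in $F$, let $C$ be an oriented Euler system of $F$, let $D$ be a directed version of $F$, and let $\mathbf o$ be a transitional orientation of $F$. Then for each transversal $T$ of $\mathfrak T(F)$, the submatrix of $\mathrm{CM}(F,\Gamma_{E,C},D)\cdot\Delta_{D,\mathbf o}$ formed by the columns in $T$ has determinant $-1$, $0$, or $1$.
   Context: Graphs: $G=(V,H,E,\epsilon)$ with finite sets of vertices $V$ and half-edges $H$, a partition $E$ of $H$ into unordered pairs (edges), and $\epsilon:H\to V$; loops and multiple edges allowed. $E'\subseteq E(G)$ is based in $G$ if it contains exactly one edge of each connected component of $G$. A directed version orders each edge as (tail, head). A single transition is an unordered pair of distinct half-edges incident with a common vertex; a directed single transition is such an ordered pair. A closed walk is a sequence $((h_1,h_2),\dots,(h_{n-1},h_n))$ of directed single transitions with $\{h_2,h_3\},\{h_4,h_5\},\dots,\{h_n,h_1\}$ edges, up to cyclic shift. $\sigma(D,W)\in\mathbb Z^{E}$ counts, at each edge, traversals by $W$ along its direction in $D$ minus traversals against it. An oriented circuit is a nonempty closed walk in which each half-edge occurs at most once. For a set $\Gamma$ of closed walks, $\mathrm{CM}(G,\Gamma,D)$ is the $\Gamma\times E(G)$ matrix whose row indexed by $W$ is $\sigma(D,W)$ (rows/columns unordered; determinants are defined up to sign). $F$ is $4$-regular if every vertex is incident with exactly $4$ half-edges. A transition at $v$ is a partition of the four half-edges at $v$ into two single transitions; $\mathfrak T(F)$ is the set of transitions, and a transversal of $\mathfrak T(F)$ contains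 exactly one transition at each vertex. A transitional orientation $\mathbf o$ assigns to each transition $t$ one of its two single transitions $\mathbf o(t)$. $\Delta_{D,\mathbf o}$ is the $E(F)\times\mathfrak T(F)$ matrix over $\mathbb Q$ whose $(e,t)$ entry is $1$ if $e\cap\mathbf o(t)=\{h\}$ with $h$ the tail of $e$ in $D$, $-1$ if $e\cap\mathbf o(t)=\{h\}$ with $h$ the head, and $0$ otherwise. An oriented Euler system of $F$ consists of one oriented Eulerian circuit for each connected component of $F$; it visits each vertex exactly twice. For a vertex $v$, the oriented circuit induced by $C$ at $v$ based on $E$ is the segment from $v$ back to $v$ of the oriented Eulerian circuit of the component of $v$ that does not traverse the edge of $E$ in that component. $\Gamma_{E,C}$ is the set of these oriented circuits over all $v\in V(F)$. *)

theory Defs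
  imports Complex_Main "HOL-Combinatorics.Permutations"
begin

(* A graph G = (V,H,E,eps): vertices V, half-edges H, E a partition of H into
   unordered pairs, eps : H -> V.  Loops and multiple edges allowed. *)
definition is_graph :: "'v set \<Rightarrow> 'h set \<Rightarrow> 'h set set \<Rightarrow> ('h \<Rightarrow> 'v) \<Rightarrow> bool" where
  "is_graph V H E eps \<longleftrightarrow> finite V \<and> finite H \<and>
     (\<forall>e\<in>E. e \<subseteq> H \<and> card e = 2) \<and> (\<forall>h\<in>H. \<exists>!e. e \<in> E \<and> h \<in> e) \<and>
     (\<forall>h\<in>H. eps h \<in> V)"

definition halfedges_at :: "'h set \<Rightarrow> ('h \<Rightarrow> 'v) \<Rightarrow> 'v \<Rightarrow> 'h set" where
  "halfedges_at H eps v = {h\<in>H. eps h = v}"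

definition four_regular :: "'v set \<Rightarrow> 'h set \<Rightarrow> ('h \<Rightarrow> 'v) \<Rightarrow> bool" where
  "four_regular V H eps \<longleftrightarrow> (\<forall>v\<in>V. card (halfedges_at H eps v) = 4)"

definition adj_rel :: "'h set set \<Rightarrow> ('h \<Rightarrow> 'v) \<Rightarrow> ('v \<times> 'v) set" where
  "adj_rel E eps = {(eps h, eps h') | h h' e. e \<in> E \<and> h \<in> e \<and> h' \<in> e}"

definition same_comp :: "'h set set \<Rightarrow> ('h \<Rightarrow> 'v) \<Rightarrow> 'v \<Rightarrow> 'v \<Rightarrow> bool" where
  "same_comp E eps v w \<longleftrightarrow> (v, w) \<in> (adj_rel E eps)\<^sup>*"

definition comp_halfedges :: "'h set \<Rightarrow> 'h set set \<Rightarrow> ('h \<Rightarrow> 'v) \<Rightarrow> 'v \<Rightarrow> 'h set" where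
  "comp_halfedges H E eps v = {h\<in>H. same_comp E eps v (eps h)}"

definition based :: "'v set \<Rightarrow> 'h set set \<Rightarrow> ('h \<Rightarrow> 'v) \<Rightarrow> 'h set set \<Rightarrow> bool" where
  "based V E eps Eb \<longleftrightarrow> Eb \<subseteq> E \<and>
     (\<forall>v\<in>V. \<exists>!e. e \<in> Eb \<and> (\<forall>h\<in>e. same_comp E eps v (eps h)))"

(* a directed version, given by the tail of each edge; the head is the other half-edge *)
definition directed_version :: "'h set set \<Rightarrow> ('h set \<Rightarrow> 'h) \<Rightarrow> bool" where
  "directed_version E tail \<longleftrightarrow> (\<forall>e\<in>E. tail e \<in> e)"

definition head_of :: "('h set \<Rightarrow> 'h) \<Rightarrow> 'h set \<Rightarrow> 'h" where
  "head_of tail e = (THE h. h \<in> e \<and> h \<noteq> tail e)"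

definition dir_single_transition :: "'h set \<Rightarrow> ('h \<Rightarrow> 'v) \<Rightarrow> 'h \<times> 'h \<Rightarrow> bool" where
  "dir_single_transition H eps p \<longleftrightarrow>
     fst p \<in> H \<and> snd p \<in> H \<and> fst p \<noteq> snd p \<and> eps (fst p) = eps (snd p)"

(* closed walks ((h1,h2),...,(h_{n-1},h_n)) represented by a list of directed single
   transitions; the edge traversed after the i-th transition is
   {snd (W!i), fst (W!((i+1) mod length W))} *)
definition walk_edge :: "('h \<times> 'h) list \<Rightarrow> nat \<Rightarrow> 'h set" where
  "walk_edge W i = {snd (W ! i), fst (W ! ((i + 1) mod length W))}"

definition closed_walk :: "'h set \<Rightarrow> 'h set set \<Rightarrow> ('h \<Rightarrow> 'v) \<Rightarrow> ('h \<times> 'h) list \<Rightarrow> bool" where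
  "closed_walk H E eps W \<longleftrightarrow> (\<forall>p\<in>set W. dir_single_transition H eps p) \<and>
     (\<forall>i<length W. walk_edge W i \<in> E)"

definition walk_halfedges :: "('h \<times> 'h) list \<Rightarrow> 'h list" where
  "walk_halfedges W = concat (map (\<lambda>p. [fst p, snd p]) W)"

definition walk_edges :: "('h \<times> 'h) list \<Rightarrow> 'h set set" where
  "walk_edges W = {walk_edge W i | i. i < length W}"

definition oriented_circuit :: "'h set \<Rightarrow> 'h set set \<Rightarrow> ('h \<Rightarrow> 'v) \<Rightarrow> ('h \<times> 'h) list \<Rightarrow> bool" where
  "oriented_circuit H E eps W \<longleftrightarrow> W \<noteq> [] \<and> closed_walk H E eps W \<and> distinct (walk_halfedges W)"

definition sigma :: "('h set \<Rightarrow> 'h) \<Rightarrow> ('h \<times> 'h) list \<Rightarrow> 'h set \<Rightarrow> int" where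
  "sigma tail W e = (\<Sum>i<length W.
      if walk_edge W i = e then (if snd (W ! i) = tail e then 1 else -1) else 0)"

definition oriented_euler_system ::
  "'v set \<Rightarrow> 'h set \<Rightarrow> 'h set set \<Rightarrow> ('h \<Rightarrow> 'v) \<Rightarrow> ('h \<times> 'h) list set \<Rightarrow> bool" where
  "oriented_euler_system V H E eps C \<longleftrightarrow>
     (\<forall>W\<in>C. oriented_circuit H E eps W \<and>
        (\<exists>v\<in>V. set (walk_halfedges W) = comp_halfedges H E eps v)) \<and>
     (\<forall>v\<in>V. \<exists>!W. W \<in> C \<and> set (walk_halfedges W) = comp_halfedges H E eps v)"

(* Z is (a representative, up to cyclic shift, of) the oriented circuit induced by C at v
   based on Eb: the segment from v back to v of the Eulerian circuit of the component of v
   that does not traverse the edge of Eb in that component *)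
definition induced_circuit ::
  "'h set \<Rightarrow> 'h set set \<Rightarrow> ('h \<Rightarrow> 'v) \<Rightarrow> 'h set set \<Rightarrow> ('h \<times> 'h) list set \<Rightarrow> 'v
     \<Rightarrow> ('h \<times> 'h) list \<Rightarrow> bool" where
  "induced_circuit H E eps Eb C v Z \<longleftrightarrow>
     (\<exists>W\<in>C. set (walk_halfedges W) = comp_halfedges H E eps v \<and>
       (\<exists>k p1 X p2 Y. rotate k W = p1 # X @ p2 # Y \<and>
          eps (fst p1) = v \<and> eps (fst p2) = v \<and>
          (\<forall>p\<in>set X \<union> set Y. eps (fst p) \<noteq> v) \<and>
          Z = (fst p2, snd p1) # X \<and>
          (\<forall>e\<in>Eb. e \<notin> walk_edges Z)))"

definition Gamma_EC ::
  "'h set \<Rightarrow> 'h set set \<Rightarrow> ('h \<Rightarrow> 'v) \<Rightarrow> 'h set set \<Rightarrow> ('h \<times> 'h) list set \<Rightarrow> 'v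
     \<Rightarrow> ('h \<times> 'h) list" where
  "Gamma_EC H E eps Eb C v = (SOME Z. induced_circuit H E eps Eb C v Z)"

definition transition_at :: "'h set \<Rightarrow> ('h \<Rightarrow> 'v) \<Rightarrow> 'v \<Rightarrow> 'h set set \<Rightarrow> bool" where
  "transition_at H eps v t \<longleftrightarrow> (\<exists>s1 s2. t = {s1, s2} \<and> card s1 = 2 \<and> card s2 = 2 \<and>
      s1 \<inter> s2 = {} \<and> s1 \<union> s2 = halfedges_at H eps v)"

definition transitions :: "'v set \<Rightarrow> 'h set \<Rightarrow> ('h \<Rightarrow> 'v) \<Rightarrow> 'h set set set" where
  "transitions V H eps = {t. \<exists>v\<in>V. transition_at H eps v t}"

definition transversal :: "'v set \<Rightarrow> 'h set \<Rightarrow> ('h \<Rightarrow> 'v) \<Rightarrow> 'h set set set \<Rightarrow> bool" where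
  "transversal V H eps T \<longleftrightarrow> T \<subseteq> transitions V H eps \<and>
     (\<forall>v\<in>V. \<exists>!t. t \<in> T \<and> transition_at H eps v t)"

definition transitional_orientation ::
  "'v set \<Rightarrow> 'h set \<Rightarrow> ('h \<Rightarrow> 'v) \<Rightarrow> ('h set set \<Rightarrow> 'h set) \<Rightarrow> bool" where
  "transitional_orientation V H eps ori \<longleftrightarrow> (\<forall>t\<in>transitions V H eps. ori t \<in> t)"

definition Delta :: "('h set \<Rightarrow> 'h) \<Rightarrow> ('h set set \<Rightarrow> 'h set) \<Rightarrow> 'h set \<Rightarrow> 'h set set \<Rightarrow> rat" where
  "Delta tail ori e t = (if e \<inter> ori t = {tail e} then 1
                       else if e \<inter> ori t = {head_of tail e} then -1 else 0)"

(* the product CM(F, Gamma_{E,C}, D) * Delta_{D,o}, rows indexed by vertices v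
   (the row of the induced circuit at v) and columns by transitions *)
definition CM_Delta ::
  "'h set \<Rightarrow> 'h set set \<Rightarrow> ('h \<Rightarrow> 'v) \<Rightarrow> 'h set set \<Rightarrow> ('h \<times> 'h) list set \<Rightarrow>
     ('h set \<Rightarrow> 'h) \<Rightarrow> ('h set set \<Rightarrow> 'h set) \<Rightarrow> 'v \<Rightarrow> 'h set set \<Rightarrow> rat" where
  "CM_Delta H E eps Eb C tail ori v t =
     (\<Sum>e\<in>E. of_int (sigma tail (Gamma_EC H E eps Eb C v) e) * Delta tail ori e t)"

definition det_on :: "'a set \<Rightarrow> ('a \<Rightarrow> 'a \<Rightarrow> rat) \<Rightarrow> rat" where
  "det_on A M = (\<Sum>p\<in>{p. p permutes A}. of_int (sign p) * (\<Prod>i\<in>A. M i (p i)))"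

(* the square submatrix formed by the columns in the transversal T; the column of the
   transition of T at w is placed in position w (determinant is up to sign anyway) *)
definition submatrix_T ::
  "'h set \<Rightarrow> ('h \<Rightarrow> 'v) \<Rightarrow> 'h set set set \<Rightarrow> ('v \<Rightarrow> 'h set set \<Rightarrow> rat) \<Rightarrow> 'v \<Rightarrow> 'v \<Rightarrow> rat" where
  "submatrix_T H eps T M v w = M v (THE t. t \<in> T \<and> transition_at H eps w t)"

end

theory Submission
  imports Defs "Jordan_Normal_Form.Determinant"
begin

lemma sum_single_nz:
  fixes g :: "nat \<Rightarrow> rat"
  assumes "j < N" "\<And>j'. j' < N \<Longrightarrow> j' \<noteq> j \<Longrightarrow> g j' = 0"
  shows "(\<Sum>j'<N. g j') = g j"
proof -
  have "(\<Sum>j'<N. g j') = g j + (\<Sum>j'\<in>{..<N} - {j}. g j')"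
    using assms(1) by (simp add: sum.remove)
  also have "(\<Sum>j'\<in>{..<N} - {j}. g j') = 0" using assms(2) by (intro sum.neutral) auto
  finally show ?thesis by simp
qed

lemma insert_index_lt: "i' < n \<Longrightarrow> i < Suc n \<Longrightarrow> insert_index i i' < Suc n"
  unfolding insert_index_def by auto

lemma insert_index_inj: "insert_index i a = insert_index i b \<Longrightarrow> a = b"
  unfolding insert_index_def by (auto split: if_splits)

lemma tu_det:
  fixes A :: "rat mat"
  assumes "A \<in> carrier_mat n n"
  and "\<And>i j. i<n \<Longrightarrow> j<n \<Longrightarrow> A$$(i,j) \<in> {-1,0,1}"
  and "\<And>i j j'. i<n \<Longrightarrow> j<n \<Longrightarrow> j'<n \<Longrightarrow> A$$(i,j) = 1 \<Longrightarrow> A$$(i,j') = 1 \<Longrightarrow> j = j'"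
  and "\<And>i j j'. i<n \<Longrightarrow> j<n \<Longrightarrow> j'<n \<Longrightarrow> A$$(i,j) = -1 \<Longrightarrow> A$$(i,j') = -1 \<Longrightarrow> j = j'"
  shows "det A \<in> {-1,0,1}"
  using assms
proof (induction n arbitrary: A)
  case 0
  then have "A = 1\<^sub>m 0" by (intro eq_matI) auto
  then show ?case by simp
next
  case (Suc n)
  note A = Suc.prems(1)
  consider (a) "\<exists>i<Suc n. \<forall>j<Suc n. A$$(i,j) = 0"
    | (b) "\<exists>i<Suc n. \<exists>j<Suc n. A$$(i,j) \<noteq> 0 \<and> (\<forall>j'<Suc n. j' \<noteq> j \<longrightarrow> A$$(i,j') = 0)"
    | (c) "\<forall>i<Suc n. \<exists>j1<Suc n. \<exists>j2<Suc n. A$$(i,j1) = 1 \<and> A$$(i,j2) = -1"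
  proof (cases "(\<exists>i<Suc n. \<forall>j<Suc n. A$$(i,j) = 0) \<or>
      (\<exists>i<Suc n. \<exists>j<Suc n. A$$(i,j) \<noteq> 0 \<and> (\<forall>j'<Suc n. j' \<noteq> j \<longrightarrow> A$$(i,j') = 0))")
    case True
    then show ?thesis using that by blast
  next
    case False
    have "\<exists>j1<Suc n. \<exists>j2<Suc n. A$$(i,j1) = 1 \<and> A$$(i,j2) = -1" if i: "i < Suc n" for i
    proof -
      from False i obtain j where j: "j < Suc n" "A$$(i,j) \<noteq> 0" by blast
      from False i j obtain j' where j': "j' < Suc n" "j' \<noteq> j" "A$$(i,j') \<noteq> 0" by blast
      have v1: "A$$(i,j) \<in> {-1,0,1}" "A$$(i,j') \<in> {-1,0,1}" using Suc.prems(2) i j j' by auto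
      show ?thesis
      proof (cases "A$$(i,j) = 1")
        case True
        then have "A$$(i,j') \<noteq> 1" using Suc.prems(3)[OF i j(1) j'(1)] j' by auto
        then have "A$$(i,j') = -1" using v1 j' by auto
        then show ?thesis using True j j' by blast
      next
        case False
        then have "A$$(i,j) = -1" using v1 j by auto
        moreover then have "A$$(i,j') \<noteq> -1" using Suc.prems(4)[OF i j(1) j'(1)] j' by auto
        then have "A$$(i,j') = 1" using v1 j' by auto
        ultimately show ?thesis using j j' by blast
      qed
    qed
    then show ?thesis using that by blast
  qed
  then show ?case
  proof cases
    case a
    then obtain i where i: "i < Suc n" "\<forall>j<Suc n. A$$(i,j) = 0" by blast
    have "det A = (\<Sum>j<Suc n. A $$ (i,j) * cofactor A i j)"
      by (rule laplace_expansion_row[OF A i(1)])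
    also have "\<dots> = 0" using i by simp
    finally show ?thesis by simp
  next
    case b
    then obtain i j where ij: "i < Suc n" "j < Suc n" "A$$(i,j) \<noteq> 0"
      "\<forall>j'<Suc n. j' \<noteq> j \<longrightarrow> A$$(i,j') = 0" by blast
    have "det A = (\<Sum>j<Suc n. A $$ (i,j) * cofactor A i j)"
      by (rule laplace_expansion_row[OF A ij(1)])
    also have "\<dots> = A $$ (i,j) * cofactor A i j"
      by (rule sum_single_nz) (use ij in auto)
    finally have d: "det A = A $$ (i,j) * ((-1)^(i+j) * det (mat_delete A i j))"
      unfolding cofactor_def .
    define B where "B = mat_delete A i j"
    have B: "B \<in> carrier_mat n n" unfolding B_def using mat_delete_carrier[OF A] by simp
    have Bi: "B $$ (i',j') = A $$ (insert_index i i', insert_index j j')" if "i' < n" "j' < n" for i' j'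
      unfolding B_def using mat_delete_index[OF A ij(1,2) that] by simp
    have "det B \<in> {-1,0,1}"
    proof (rule Suc.IH[OF B])
      fix i' j' assume "i' < n" "j' < n"
      then show "B$$(i',j') \<in> {-1,0,1}" using Bi Suc.prems(2) insert_index_lt ij by simp
    next
      fix i' j' j'' assume h: "i' < n" "j' < n" "j'' < n" "B$$(i',j') = 1" "B$$(i',j'') = 1"
      then show "j' = j''" using Bi Suc.prems(3)[of "insert_index i i'" "insert_index j j'" "insert_index j j''"]
        insert_index_lt ij insert_index_inj by metis
    next
      fix i' j' j'' assume h: "i' < n" "j' < n" "j'' < n" "B$$(i',j') = -1" "B$$(i',j'') = -1"
      then show "j' = j''" using Bi Suc.prems(4)[of "insert_index i i'" "insert_index j j'" "insert_index j j''"]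
        insert_index_lt ij insert_index_inj by metis
    qed
    moreover have "A$$(i,j) \<in> {-1,1}" using Suc.prems(2) ij by auto
    moreover have "((-1::rat)^(i+j)) \<in> {-1,1}" by (cases "even (i+j)") auto
    ultimately show ?thesis unfolding d B_def[symmetric] by auto
  next
    case c
    have "A *\<^sub>v vec (Suc n) (\<lambda>_. 1) = 0\<^sub>v (Suc n)"
    proof (rule eq_vecI)
      fix i assume i: "i < dim_vec (0\<^sub>v (Suc n) :: rat vec)"
      then have i': "i < Suc n" by simp
      from c i' obtain j1 j2 where j: "j1 < Suc n" "j2 < Suc n" "A$$(i,j1) = 1" "A$$(i,j2) = -1" by blast
      have ne: "j1 \<noteq> j2" using j by auto
      have z: "A$$(i,j') = 0" if "j' < Suc n" "j' \<noteq> j1" "j' \<noteq> j2" for j'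
      proof -
        have "A$$(i,j') \<in> {-1,0,1}" using Suc.prems(2) i' that by auto
        moreover have "A$$(i,j') \<noteq> 1" using Suc.prems(3)[OF i' that(1) j(1)] j that by auto
        moreover have "A$$(i,j') \<noteq> -1" using Suc.prems(4)[OF i' that(1) j(2)] j that by auto
        ultimately show ?thesis by auto
      qed
      have "(A *\<^sub>v vec (Suc n) (\<lambda>_. 1)) $ i = (\<Sum>j<Suc n. A$$(i,j))"
        using A i' by (simp add: mult_mat_vec_def scalar_prod_def lessThan_atLeast0)
      also have "\<dots> = A$$(i,j1) + (\<Sum>j\<in>{..<Suc n} - {j1}. A$$(i,j))"
        using j by (subst sum.remove[of _ j1]) auto
      also have "(\<Sum>j\<in>{..<Suc n} - {j1}. A$$(i,j)) = A$$(i,j2) + (\<Sum>j\<in>{..<Suc n} - {j1} - {j2}. A$$(i,j))"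
        using j ne by (subst sum.remove[of _ j2]) auto
      also have "(\<Sum>j\<in>{..<Suc n} - {j1} - {j2}. A$$(i,j)) = 0" using z by (intro sum.neutral) auto
      finally show "(A *\<^sub>v vec (Suc n) (\<lambda>_. 1)) $ i = 0\<^sub>v (Suc n) $ i" using j i' by simp
    qed (use A in simp)
    moreover have "vec (Suc n) (\<lambda>_. 1) \<noteq> (0\<^sub>v (Suc n) :: rat vec)"
      by (metis index_vec index_zero_vec(1) zero_less_Suc zero_neq_one)
    moreover have "vec (Suc n) (\<lambda>_. 1) \<in> (carrier_vec (Suc n) :: rat vec set)" by simp
    ultimately have "det A = 0" using det_0_iff_vec_prod_zero[OF A] by blast
    then show ?thesis by simp
  qed
qed

lemma det_on_conv:
  fixes N :: "'a \<Rightarrow> 'a \<Rightarrow> rat"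
  assumes bij: "bij_betw f {0..<n} A"
  shows "det_on A N = det (mat n n (\<lambda>(i,j). N (f i) (f j)))"
proof -
  define g where "g = inv_into {0..<n} f"
  have gf: "g (f i) = i" if "i \<in> {0..<n}" for i
    using bij that unfolding g_def by (simp add: bij_betw_inv_into_left)
  have fg: "f (g x) = x" if "x \<in> A" for x
    using bij that unfolding g_def by (simp add: bij_betw_inv_into_right)
  have gA: "g x \<in> {0..<n}" if "x \<in> A" for x
    using bij that unfolding g_def by (metis bij_betw_def inv_into_into)
  have fA: "f i \<in> A" if "i \<in> {0..<n}" for i using bij that by (simp add: bij_betw_apply)
  have finA: "finite A" using bij bij_betw_finite by blast
  have bijg: "bij_betw g A {0..<n}" using bij unfolding g_def by (rule bij_betw_inv_into)
  define \<Phi> where "\<Phi> p = (\<lambda>x. if x \<in> A then f (p (g x)) else x)" for p :: "nat \<Rightarrow> nat"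
  define \<Psi> where "\<Psi> q = (\<lambda>i. if i \<in> {0..<n} then g (q (f i)) else i)" for q
  have loc: "permutes_bij_finite p {0..<n} A f g" if "p permutes {0..<n}" for p
    by unfold_locales (use that bij gf in auto)
  have loc2: "permutes_bij q A {0..<n} g f" if "q permutes A" for q
    by unfold_locales (use that bijg fg in auto)
  have Phi_perm: "\<Phi> p permutes A" if "p permutes {0..<n}" for p
    using permutes_bij.permutes_p'[OF permutes_bij_finite.axioms(1)[OF loc[OF that]]]
    unfolding \<Phi>_def by simp
  have Phi_sign: "sign (\<Phi> p) = sign p" if "p permutes {0..<n}" for p
    using permutes_bij_finite.sign_p'[OF loc[OF that]] unfolding \<Phi>_def by simp
  have Psi_perm: "\<Psi> q permutes {0..<n}" if "q permutes A" for q
    using permutes_bij.permutes_p'[OF loc2[OF that]] unfolding \<Psi>_def by simp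
  have bijPhi: "bij_betw \<Phi> {p. p permutes {0..<n}} {q. q permutes A}"
  proof (rule bij_betw_byWitness[where f'=\<Psi>])
    show "\<forall>p\<in>{p. p permutes {0..<n}}. \<Psi> (\<Phi> p) = p"
    proof
      fix p assume p: "p \<in> {p. p permutes {0..<n}}"
      show "\<Psi> (\<Phi> p) = p"
      proof
        fix i show "\<Psi> (\<Phi> p) i = p i"
        proof (cases "i \<in> {0..<n}")
          case True
          then have "p i \<in> {0..<n}" using p by (simp add: permutes_in_image)
          then show ?thesis using True unfolding \<Psi>_def \<Phi>_def by (simp add: fA gf)
        next
          case False
          then show ?thesis using p unfolding \<Psi>_def by (simp add: permutes_not_in)
        qed
      qed
    qed
    show "\<forall>q\<in>{q. q permutes A}. \<Phi> (\<Psi> q) = q"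
    proof
      fix q assume q: "q \<in> {q. q permutes A}"
      show "\<Phi> (\<Psi> q) = q"
      proof
        fix x show "\<Phi> (\<Psi> q) x = q x"
        proof (cases "x \<in> A")
          case True
          then have "q x \<in> A" using q by (simp add: permutes_in_image)
          have "g x \<in> {0..<n}" using gA True by blast
          then show ?thesis using True \<open>q x \<in> A\<close> unfolding \<Psi>_def \<Phi>_def by (simp add: fg)
        next
          case False
          then show ?thesis using q unfolding \<Phi>_def by (simp add: permutes_not_in)
        qed
      qed
    qed
    show "\<Phi> ` {p. p permutes {0..<n}} \<subseteq> {q. q permutes A}" using Phi_perm by auto
    show "\<Psi> ` {q. q permutes A} \<subseteq> {p. p permutes {0..<n}}" using Psi_perm by auto
  qed
  have trm: "of_int (sign (\<Phi> p)) * (\<Prod>x\<in>A. N x (\<Phi> p x))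
      = signof p * (\<Prod>i = 0..<n. mat n n (\<lambda>(i,j). N (f i) (f j)) $$ (i, p i))"
    if p: "p permutes {0..<n}" for p
  proof -
    have "(\<Prod>x\<in>A. N x (\<Phi> p x)) = (\<Prod>i\<in>{0..<n}. N (f i) (\<Phi> p (f i)))"
      using prod.reindex_bij_betw[OF bij, of "\<lambda>x. N x (\<Phi> p x)"] by simp
    also have "\<dots> = (\<Prod>i = 0..<n. mat n n (\<lambda>(i,j). N (f i) (f j)) $$ (i, p i))"
    proof (rule prod.cong)
      fix i assume i: "i \<in> {0..<n}"
      then have "p i \<in> {0..<n}" using p by (simp add: permutes_in_image)
      then show "N (f i) (\<Phi> p (f i)) = mat n n (\<lambda>(i,j). N (f i) (f j)) $$ (i, p i)"
        using i unfolding \<Phi>_def by (simp add: fA gf)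
    qed simp
    finally show ?thesis using Phi_sign[OF p] by simp
  qed
  have "det (mat n n (\<lambda>(i,j). N (f i) (f j))) = (\<Sum>p\<in>{p. p permutes {0..<n}}.
      signof p * (\<Prod>i = 0..<n. mat n n (\<lambda>(i,j). N (f i) (f j)) $$ (i, p i)))"
    by (rule det_def') simp
  also have "\<dots> = (\<Sum>p\<in>{p. p permutes {0..<n}}. of_int (sign (\<Phi> p)) * (\<Prod>x\<in>A. N x (\<Phi> p x)))"
    using trm by simp
  also have "\<dots> = (\<Sum>q\<in>{q. q permutes A}. of_int (sign q) * (\<Prod>x\<in>A. N x (q x)))"
    by (rule sum.reindex_bij_betw[OF bijPhi])
  finally show ?thesis unfolding det_on_def by simp
qed

lemma block_arg:
  fixes X Y K Kc :: "nat \<Rightarrow> nat \<Rightarrow> rat" and idx :: "nat \<Rightarrow> nat"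
  assumes m: "m = n + k"
    and idx: "\<And>l. l < k \<Longrightarrow> idx l < n"
    and YK: "\<And>j l. j < m \<Longrightarrow> l < k \<Longrightarrow> Y j l = K j (idx l) + Kc j l"
    and XY: "\<And>r l. r < n \<Longrightarrow> l < k \<Longrightarrow> (\<Sum>j<m. X r j * Y j l) = 0"
  shows "det (mat m m (\<lambda>(r,j). if r < n then X r j else Y j (r - n)))
       * det (mat m m (\<lambda>(j,c). if c < n then K j c else Kc j (c - n)))
       = det (mat n n (\<lambda>(r,c). \<Sum>j<m. X r j * K j c))
       * det (mat k k (\<lambda>(l,l'). \<Sum>j<m. Y j l * Y j l'))"
proof -
  define R where "R = mat m m (\<lambda>(r,j). if r < n then X r j else Y j (r - n))"
  define KK where "KK = mat m m (\<lambda>(j,c). if c < n then K j c else Kc j (c - n))"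
  define U where "U = (mat m m (\<lambda>(r,c). (if r = c then 1 else 0) +
      (if r < n \<and> n \<le> c \<and> r = idx (c - n) then 1 else 0)) :: rat mat)"
  define KY where "KY = mat m m (\<lambda>(j,c). if c < n then K j c else Y j (c - n))"
  define MA where "MA = mat n n (\<lambda>(r,c). \<Sum>j<m. X r j * K j c)"
  define G where "G = mat k k (\<lambda>(l,l'). \<Sum>j<m. Y j l * Y j l')"
  define A3 where "A3 = mat k n (\<lambda>(l,c). \<Sum>j<m. Y j l * K j c)"
  have R: "R \<in> carrier_mat m m" and KK: "KK \<in> carrier_mat m m" and U: "U \<in> carrier_mat m m"
    unfolding R_def KK_def U_def by auto
  have detU: "det U = 1"
  proof -
    have "upper_triangular U" unfolding U_def upper_triangular_def by auto
    then have "det U = prod_list (diag_mat U)" using det_upper_triangular U by blast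
    also have "\<dots> = (\<Prod>i = 0..<m. U $$ (i,i))" by (simp add: prod_list_diag_prod U_def)
    also have "\<dots> = 1" unfolding U_def by (intro prod.neutral) auto
    finally show ?thesis .
  qed
  have KU: "KK * U = KY"
  proof (rule eq_matI)
    fix j c assume jc: "j < dim_row KY" "c < dim_col KY"
    then have j: "j < m" and c: "c < m" unfolding KY_def by auto
    have "(KK * U) $$ (j,c) = (\<Sum>r<m. KK $$ (j,r) * U $$ (r,c))"
      using j c KK U by (simp add: scalar_prod_def lessThan_atLeast0)
    also have "\<dots> = (\<Sum>r<m. KK $$ (j,r) * (if r = c then 1 else 0)) +
        (\<Sum>r<m. KK $$ (j,r) * (if r < n \<and> n \<le> c \<and> r = idx (c - n) then 1 else 0))"
      unfolding sum.distrib[symmetric] using c by (intro sum.cong) (auto simp: U_def algebra_simps)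
    also have "(\<Sum>r<m. KK $$ (j,r) * (if r = c then 1 else 0)) = KK $$ (j,c)"
      using c by (simp add: if_distrib cong: if_cong)
    also have "(\<Sum>r<m. KK $$ (j,r) * (if r < n \<and> n \<le> c \<and> r = idx (c - n) then 1 else 0))
        = (if n \<le> c then KK $$ (j, idx (c - n)) else 0)"
    proof (cases "n \<le> c")
      case True
      have "c - n < k" using True c m by auto
      then have i1: "idx (c - n) < n" using idx[of "c - n"] by auto
      have "(\<Sum>r<m. KK $$ (j,r) * (if r < n \<and> n \<le> c \<and> r = idx (c - n) then 1 else 0))
          = (\<Sum>r<m. if r = idx (c - n) then KK $$ (j,r) else 0)"
        using True i1 by (intro sum.cong) auto
      also have "\<dots> = KK $$ (j, idx (c - n))" using i1 m by simp
      finally show ?thesis using True by simp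
    qed simp
    also have "KK $$ (j,c) + (if n \<le> c then KK $$ (j, idx (c - n)) else 0) = KY $$ (j,c)"
    proof (cases "n \<le> c")
      case True
      have "c - n < k" using True c m by auto
      then have "idx (c - n) < n" using idx[of "c - n"] by auto
      then show ?thesis using True j c m YK[of j "c - n"] unfolding KK_def KY_def by auto
    next
      case False
      then show ?thesis using j c unfolding KK_def KY_def by auto
    qed
    finally show "(KK * U) $$ (j,c) = KY $$ (j,c)" .
  qed (auto simp: KK_def KY_def U_def)
  have RKY: "R * KY = four_block_mat MA (0\<^sub>m n k) A3 G"
  proof (rule eq_matI)
    fix r c assume rc: "r < dim_row (four_block_mat MA (0\<^sub>m n k) A3 G)"
      "c < dim_col (four_block_mat MA (0\<^sub>m n k) A3 G)"
    then have r: "r < m" and c: "c < m" using m by (auto simp: MA_def G_def)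
    have "(R * KY) $$ (r,c) = (\<Sum>j<m. R $$ (r,j) * KY $$ (j,c))"
      using r c by (simp add: R_def KY_def scalar_prod_def lessThan_atLeast0)
    also have "\<dots> = (\<Sum>j<m. (if r < n then X r j else Y j (r - n)) * (if c < n then K j c else Y j (c - n)))"
      using r c by (intro sum.cong) (auto simp: R_def KY_def)
    also have "\<dots> = four_block_mat MA (0\<^sub>m n k) A3 G $$ (r,c)"
      using r c m XY[of r "c - n"] by (auto simp: MA_def G_def A3_def)
    finally show "(R * KY) $$ (r,c) = four_block_mat MA (0\<^sub>m n k) A3 G $$ (r,c)" .
  qed (use m in \<open>auto simp: R_def KY_def MA_def G_def\<close>)
  have "det (R * (KK * U)) = det R * (det KK * det U)"
    using det_mult[OF KK U] det_mult[OF R, of "KK * U"] KK U by (metis mult_carrier_mat)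
  also have "R * (KK * U) = four_block_mat MA (0\<^sub>m n k) A3 G" using KU RKY by simp
  finally have "det R * det KK = det (four_block_mat MA (0\<^sub>m n k) A3 G)" using detU by simp
  also have "\<dots> = det MA * det G"
    by (rule det_four_block_mat_upper_right_zero) (auto simp: MA_def G_def A3_def)
  finally show ?thesis unfolding R_def KK_def MA_def G_def .
qed

definition ind :: "'h set \<Rightarrow> 'h \<Rightarrow> rat" where "ind s h = (if h \<in> s then 1 else 0)"

definition dl :: "('h set \<Rightarrow> 'h) \<Rightarrow> ('h \<Rightarrow> rat) \<Rightarrow> 'h set \<Rightarrow> rat" where
  "dl tail f e = f (tail e) - f (head_of tail e)"

lemma set_walk_halfedges: "set (walk_halfedges W) = fst ` set W \<union> snd ` set W"
  unfolding walk_halfedges_def by (induction W) auto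

lemma length_walk_halfedges: "length (walk_halfedges W) = 2 * length W"
  unfolding walk_halfedges_def by (induction W) auto

lemma walk_halfedges_Cons: "walk_halfedges (p # W) = fst p # snd p # walk_halfedges W"
  unfolding walk_halfedges_def by simp

lemma W_good:
  assumes "distinct (walk_halfedges W)"
  shows "distinct W \<and> (\<forall>p\<in>set W. \<forall>q\<in>set W. (fst p = fst q \<longrightarrow> p = q) \<and> (snd p = snd q \<longrightarrow> p = q) \<and> fst p \<noteq> snd q)"
  using assms
proof (induction W)
  case Nil
  then show ?case by simp
next
  case (Cons a W)
  have d: "distinct (walk_halfedges W)" "fst a \<notin> set (walk_halfedges W)" "snd a \<notin> set (walk_halfedges W)"
    "fst a \<noteq> snd a"
    using Cons.prems by (auto simp: walk_halfedges_Cons)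
  then have IH: "distinct W \<and> (\<forall>p\<in>set W. \<forall>q\<in>set W. (fst p = fst q \<longrightarrow> p = q) \<and> (snd p = snd q \<longrightarrow> p = q) \<and> fst p \<noteq> snd q)"
    using Cons.IH by blast
  have mem: "fst q \<in> set (walk_halfedges W) \<and> snd q \<in> set (walk_halfedges W)" if "q \<in> set W" for q
    using that unfolding set_walk_halfedges by auto
  have "a \<notin> set W" using d(2) mem by blast
  moreover have "\<forall>q\<in>set W. fst q \<noteq> fst a \<and> snd q \<noteq> snd a \<and> fst q \<noteq> snd a \<and> snd q \<noteq> fst a"
    using d(2,3) mem by metis
  ultimately show ?case using IH d(4) by auto
qed

lemma distinct_walk_halfedges_rotate:
  "distinct (walk_halfedges (rotate k W)) = distinct (walk_halfedges W)"
proof -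
  have "walk_halfedges (rotate k W) = rotate (2 * k) (walk_halfedges W)"
  proof (induction k)
    case 0
    then show ?case by simp
  next
    case (Suc k)
    have "walk_halfedges (rotate (Suc k) W) = walk_halfedges (rotate1 (rotate k W))"
      by (simp add: rotate_def)
    also have "\<dots> = rotate1 (rotate1 (walk_halfedges (rotate k W)))"
      by (cases "rotate k W") (auto simp: walk_halfedges_def)
    also have "\<dots> = rotate (2 * Suc k) (walk_halfedges W)" using Suc
      by (simp add: rotate_def)
    finally show ?case .
  qed
  then show ?thesis by simp
qed

lemma walk_edge_rotate:
  assumes "i < length W"
  shows "walk_edge (rotate k W) i = walk_edge W ((i + k) mod length W)"
proof -
  have L: "0 < length W" using assms by linarith
  have "(Suc i mod length W + k) mod length W = Suc ((i + k) mod length W) mod length W"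
    by (metis add_Suc mod_add_left_eq mod_Suc_eq)
  then show ?thesis
    unfolding walk_edge_def using assms L
    by (simp add: nth_rotate add.commute)
qed

lemma closed_walk_rotate:
  assumes "closed_walk H E eps W"
  shows "closed_walk H E eps (rotate k W)"
proof -
  have "walk_edge (rotate k W) i \<in> E" if i: "i < length (rotate k W)" for i
  proof -
    have "i < length W" using i by simp
    then have "0 < length W" by linarith
    then have "(i + k) mod length W < length W" by simp
    then show ?thesis using assms i unfolding closed_walk_def by (simp add: walk_edge_rotate)
  qed
  then show ?thesis using assms unfolding closed_walk_def by simp
qed

lemma seg_walk_edge:
  assumes "Z = (fst p2, snd p1) # X" "i < length Z"
  shows "walk_edge Z i = {snd ((p1 # X) ! i), fst ((X @ [p2]) ! i)}"
proof -
  have s: "snd (Z ! i) = snd ((p1 # X) ! i)" using assms by (cases i) auto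
  have f: "fst (Z ! (Suc i mod length Z)) = fst ((X @ [p2]) ! i)"
  proof (cases "Suc i < length Z")
    case True
    then have "i < length X" using assms by simp
    then show ?thesis using True assms by (simp add: nth_append)
  next
    case False
    then have "Suc i = length Z" using assms by simp
    then have "i = length X" "Suc i mod length Z = 0" using assms by auto
    then show ?thesis using assms by simp
  qed
  show ?thesis unfolding walk_edge_def using s f by simp
qed

lemma seg_walk_edge_R:
  assumes "Z = (fst p2, snd p1) # X" "i < length Z" "R = p1 # X @ p2 # Y"
  shows "walk_edge Z i = walk_edge R i"
proof -
  have "R ! i = (p1 # X) ! i" using assms by (auto simp: nth_append nth_Cons split: nat.splits)
  moreover have "(Suc i) mod length R = Suc i" using assms by simp
  moreover have "R ! (Suc i) = (X @ [p2]) ! i" using assms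
    by (auto simp: nth_append nth_Cons split: nat.splits)
  ultimately show ?thesis using seg_walk_edge[OF assms(1,2)] unfolding walk_edge_def by simp
qed

lemma cyc_const:
  fixes f :: "nat \<Rightarrow> 'a"
  assumes "0 < L" "i0 < L" "\<And>i. i < L \<Longrightarrow> i \<noteq> i0 \<Longrightarrow> f i = f (Suc i mod L)"
  shows "\<And>i. i < L \<Longrightarrow> f i = f (Suc i0 mod L)"
proof -
  have step: "d < L \<Longrightarrow> f ((Suc i0 + d) mod L) = f (Suc i0 mod L)" for d
  proof (induction d)
    case 0
    then show ?case by simp
  next
    case (Suc d)
    define i where "i = (Suc i0 + d) mod L"
    have iL: "i < L" using assms(1) unfolding i_def by simp
    have "i \<noteq> i0"
    proof
      assume "i = i0"
      then have "(Suc i0 + d) mod L = i0 mod L" using assms(2) unfolding i_def by simp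
      then have "(i0 + Suc d) mod L = i0 mod L" by simp
      then have "L dvd (i0 + Suc d - i0)" using mod_eq_dvd_iff_nat[of i0 "i0 + Suc d" L] by simp
      then have "L dvd Suc d" by simp
      then have "L \<le> Suc d" by (simp add: dvd_imp_le)
      then show False using Suc.prems by simp
    qed
    then have a1: "f i = f (Suc i mod L)" using assms(3) iL by blast
    have a2: "Suc i mod L = (Suc i0 + Suc d) mod L" unfolding i_def by (simp add: mod_Suc_eq)
    have a3: "f i = f (Suc i0 mod L)" using Suc.IH Suc.prems unfolding i_def by simp
    show ?case using a1 a2 a3 by metis
  qed
  fix i assume i: "i < L"
  define d where "d = (L + i - Suc i0) mod L"
  have "(Suc i0 + d) mod L = i"
  proof -
    have "(Suc i0 + d) mod L = (Suc i0 + (L + i - Suc i0)) mod L" unfolding d_def by (metis mod_add_right_eq)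
    also have "Suc i0 + (L + i - Suc i0) = L + i" using assms(2) by simp
    finally show ?thesis using i by simp
  qed
  moreover have "d < L" unfolding d_def using assms(1) by simp
  ultimately show "f i = f (Suc i0 mod L)" using step by metis
qed

locale eul =
  fixes V :: "'v set" and H :: "'h set" and E :: "'h set set" and eps :: "'h \<Rightarrow> 'v"
    and Eb :: "'h set set" and C :: "('h \<times> 'h) list set" and tail :: "'h set \<Rightarrow> 'h"
    and ori :: "'h set set \<Rightarrow> 'h set" and T :: "'h set set set"
  assumes G: "is_graph V H E eps" and R4: "four_regular V H eps" and Bs: "based V E eps Eb"
    and ES: "oriented_euler_system V H E eps C" and DV: "directed_version E tail"
    and TO: "transitional_orientation V H eps ori" and TV: "transversal V H eps T"
begin

abbreviation hv where "hv w \<equiv> halfedges_at H eps w"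
abbreviation hd where "hd e \<equiv> head_of tail e"
abbreviation sc where "sc \<equiv> same_comp E eps"
abbreviation comp where "comp v \<equiv> comp_halfedges H E eps v"
abbreviation Z where "Z v \<equiv> Gamma_EC H E eps Eb C v"

lemma finV: "finite V" and finH: "finite H" using G unfolding is_graph_def by auto
lemma E_sub: "e \<in> E \<Longrightarrow> e \<subseteq> H" and E_card: "e \<in> E \<Longrightarrow> card e = 2"
  using G unfolding is_graph_def by auto
lemma H_ex1: "h \<in> H \<Longrightarrow> \<exists>!e. e \<in> E \<and> h \<in> e" using G unfolding is_graph_def by auto
lemma epsV: "h \<in> H \<Longrightarrow> eps h \<in> V" using G unfolding is_graph_def by auto
lemma finE: "finite E"
proof -
  have "E \<subseteq> Pow H" using E_sub by auto
  then show ?thesis by (rule finite_subset) (simp add: finH)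
qed

lemma edge_form:
  assumes "e \<in> E"
  shows "tail e \<in> e \<and> hd e \<in> e \<and> hd e \<noteq> tail e \<and> e = {tail e, hd e}"
proof -
  obtain a b where ab: "a \<noteq> b" "e = {a, b}" using E_card[OF assms] unfolding card_2_iff by blast
  have t: "tail e \<in> e" using DV assms unfolding directed_version_def by auto
  define oo where "oo = (if tail e = a then b else a)"
  have o: "oo \<in> e" "oo \<noteq> tail e" using ab t unfolding oo_def by auto
  have "hd e = oo" unfolding head_of_def
  proof (rule the_equality)
    show "oo \<in> e \<and> oo \<noteq> tail e" using o by simp
    fix h assume "h \<in> e \<and> h \<noteq> tail e"
    then show "h = oo" using ab t unfolding oo_def by auto
  qed
  then show ?thesis using o t ab by auto
qed

lemma hv_disj: "w \<noteq> w' \<Longrightarrow> hv w \<inter> hv w' = {}"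
  unfolding halfedges_at_def by auto
lemma hv_card: "w \<in> V \<Longrightarrow> card (hv w) = 4" using R4 unfolding four_regular_def by auto
lemma hv_sub: "hv w \<subseteq> H" unfolding halfedges_at_def by auto

lemma adj_sym: "sym (adj_rel E eps)"
  unfolding adj_rel_def sym_def by blast
lemma sc_refl: "sc x x" unfolding same_comp_def by simp
lemma sc_sym: "sc x y \<Longrightarrow> sc y x"
  unfolding same_comp_def using symD[OF sym_rtrancl[OF adj_sym]] by blast
lemma sc_trans: "sc x y \<Longrightarrow> sc y z \<Longrightarrow> sc x z"
  unfolding same_comp_def by simp
lemma sc_adj: "e \<in> E \<Longrightarrow> h \<in> e \<Longrightarrow> h' \<in> e \<Longrightarrow> sc (eps h) (eps h')"
  unfolding same_comp_def adj_rel_def by blast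
lemma comp_eq: "sc x y \<Longrightarrow> comp x = comp y"
  unfolding comp_halfedges_def using sc_sym sc_trans by blast

lemma C_circ: "W \<in> C \<Longrightarrow> oriented_circuit H E eps W \<and> (\<exists>v\<in>V. set (walk_halfedges W) = comp v)"
  using ES unfolding oriented_euler_system_def by auto
lemma W_of: "v \<in> V \<Longrightarrow> \<exists>W\<in>C. set (walk_halfedges W) = comp v"
proof -
  assume v: "v \<in> V"
  have "\<exists>!W. W \<in> C \<and> set (walk_halfedges W) = comp v" using ES v unfolding oriented_euler_system_def by blast
  then show ?thesis by blast
qed
lemma W_uniq: "v \<in> V \<Longrightarrow> W1 \<in> C \<Longrightarrow> W2 \<in> C \<Longrightarrow> set (walk_halfedges W1) = comp v
   \<Longrightarrow> set (walk_halfedges W2) = comp v \<Longrightarrow> W1 = W2"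
proof -
  assume a: "v \<in> V" "W1 \<in> C" "W2 \<in> C" "set (walk_halfedges W1) = comp v" "set (walk_halfedges W2) = comp v"
  have "\<exists>!W. W \<in> C \<and> set (walk_halfedges W) = comp v" using ES a(1) unfolding oriented_euler_system_def by blast
  then show ?thesis using a by blast
qed

lemma C_same:
  assumes "W1 \<in> C" "W2 \<in> C" "h \<in> set (walk_halfedges W1)" "h \<in> set (walk_halfedges W2)"
  shows "W1 = W2"
proof -
  obtain x1 where x1: "x1 \<in> V" "set (walk_halfedges W1) = comp x1" using C_circ assms(1) by blast
  obtain x2 where x2: "x2 \<in> V" "set (walk_halfedges W2) = comp x2" using C_circ assms(2) by blast
  have "sc x1 (eps h)" using x1 assms(3) unfolding comp_halfedges_def by auto
  moreover have "sc x2 (eps h)" using x2 assms(4) unfolding comp_halfedges_def by auto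
  ultimately have "sc x1 x2" using sc_sym sc_trans by blast
  then have "comp x1 = comp x2" by (rule comp_eq)
  then show ?thesis using W_uniq[OF x1(1) assms(1,2)] x1 x2 by simp
qed

lemma W_dist: "W \<in> C \<Longrightarrow> distinct (walk_halfedges W)"
  using C_circ unfolding oriented_circuit_def by auto

lemma W_cw: "W \<in> C \<Longrightarrow> closed_walk H E eps W"
  using C_circ unfolding oriented_circuit_def by auto

lemma trs_basic:
  assumes "W \<in> C" "p \<in> set W"
  shows "fst p \<in> H \<and> snd p \<in> H \<and> eps (fst p) = eps (snd p) \<and> fst p \<noteq> snd p"
proof -
  have "dir_single_transition H eps p" using W_cw[OF assms(1)] assms(2) unfolding closed_walk_def by blast
  then show ?thesis unfolding dir_single_transition_def by simp
qed

lemma trs_cross: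
  assumes "W1 \<in> C" "W2 \<in> C" "p \<in> set W1" "q \<in> set W2"
  shows "(fst p = fst q \<longrightarrow> p = q) \<and> (snd p = snd q \<longrightarrow> p = q) \<and> fst p \<noteq> snd q"
proof -
  have m1: "fst p \<in> set (walk_halfedges W1)" "snd p \<in> set (walk_halfedges W1)"
    using assms(3) unfolding set_walk_halfedges by auto
  have m2: "fst q \<in> set (walk_halfedges W2)" "snd q \<in> set (walk_halfedges W2)"
    using assms(4) unfolding set_walk_halfedges by auto
  have G: "\<forall>p\<in>set W1. \<forall>q\<in>set W1. (fst p = fst q \<longrightarrow> p = q) \<and> (snd p = snd q \<longrightarrow> p = q) \<and> fst p \<noteq> snd q"
    using W_good[OF W_dist[OF assms(1)]] by blast
  show ?thesis
  proof (intro conjI impI)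
    assume h: "fst p = fst q"
    then have "W1 = W2" using C_same[OF assms(1,2) m1(1)] m2(1) by simp
    then have "q \<in> set W1" using assms(4) by simp
    then show "p = q" using G assms(3) h by blast
  next
    assume h: "snd p = snd q"
    then have "W1 = W2" using C_same[OF assms(1,2) m1(2)] m2(2) by simp
    then have "q \<in> set W1" using assms(4) by simp
    then show "p = q" using G assms(3) h by blast
  next
    show "fst p \<noteq> snd q"
    proof
      assume h: "fst p = snd q"
      then have "W1 = W2" using C_same[OF assms(1,2) m1(1)] m2(2) by simp
      then have "q \<in> set W1" using assms(4) by simp
      then show False using G assms(3) h by blast
    qed
  qed
qed

lemma W_distinct: "W \<in> C \<Longrightarrow> distinct W"
  using W_good W_dist by blast

lemma base_ex: "v \<in> V \<Longrightarrow> \<exists>b\<in>Eb. \<forall>h\<in>b. sc v (eps h)"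
  using Bs unfolding based_def by blast
lemma base_uniq: "v \<in> V \<Longrightarrow> b1 \<in> Eb \<Longrightarrow> b2 \<in> Eb \<Longrightarrow> \<forall>h\<in>b1. sc v (eps h) \<Longrightarrow> \<forall>h\<in>b2. sc v (eps h)
  \<Longrightarrow> b1 = b2"
proof -
  assume a: "v \<in> V" "b1 \<in> Eb" "b2 \<in> Eb" "\<forall>h\<in>b1. sc v (eps h)" "\<forall>h\<in>b2. sc v (eps h)"
  have "\<exists>!e. e \<in> Eb \<and> (\<forall>h\<in>e. sc v (eps h))" using Bs a(1) unfolding based_def by blast
  then show ?thesis using a by blast
qed
lemma Eb_sub: "Eb \<subseteq> E" using Bs unfolding based_def by auto

lemma comp_hv: "v \<in> V \<Longrightarrow> hv v \<subseteq> comp v"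
  unfolding comp_halfedges_def halfedges_at_def using sc_refl by auto

lemma filter_two:
  assumes v: "v \<in> V" and W: "W \<in> C" "set (walk_halfedges W) = comp v"
  shows "length (filter (\<lambda>p. eps (fst p) = v) W) = 2"
proof -
  let ?P = "\<lambda>p. eps (fst p) = v"
  let ?Q = "\<lambda>h. eps h = v"
  have tr: "\<forall>p\<in>set W. eps (fst p) = eps (snd p)" using trs_basic[OF W(1)] by blast
  have wf: "walk_halfedges (filter ?P W) = filter ?Q (walk_halfedges W)"
    using tr by (induction W) (auto simp: walk_halfedges_Cons walk_halfedges_def)
  have "distinct (filter ?Q (walk_halfedges W))" using W_dist[OF W(1)] by simp
  then have "card (set (filter ?Q (walk_halfedges W))) = length (filter ?Q (walk_halfedges W))"
    by (rule distinct_card)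
  also have "\<dots> = 2 * length (filter ?P W)" unfolding wf[symmetric] length_walk_halfedges ..
  finally have c: "card (set (filter ?Q (walk_halfedges W))) = 2 * length (filter ?P W)" .
  have "set (filter ?Q (walk_halfedges W)) = hv v"
    using W(2) comp_hv[OF v] unfolding comp_halfedges_def halfedges_at_def by auto
  then show ?thesis using c hv_card[OF v] by simp
qed

end

lemma sum_shift_mod:
  fixes g :: "nat \<Rightarrow> rat"
  assumes "0 < L"
  shows "(\<Sum>i<L. g (Suc i mod L)) = (\<Sum>i<L. g i)"
proof -
  obtain L' where L: "L = Suc L'" using assms by (cases L) auto
  have "(\<Sum>i<L. g (Suc i mod L)) = (\<Sum>i<L'. g (Suc i mod L)) + g (Suc L' mod L)"
    unfolding L by simp
  also have "(\<Sum>i<L'. g (Suc i mod L)) = (\<Sum>i<L'. g (Suc i))"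
    by (intro sum.cong) (auto simp: L)
  also have "g (Suc L' mod L) = g 0" unfolding L by simp
  also have "(\<Sum>i<L'. g (Suc i)) + g 0 = (\<Sum>i<L. g i)"
    unfolding L sum.lessThan_Suc_shift by simp
  finally show ?thesis .
qed

context eul
begin

lemma induced_ex:
  assumes v: "v \<in> V"
  shows "\<exists>Zz. induced_circuit H E eps Eb C v Zz"
proof -
  obtain W where W: "W \<in> C" "set (walk_halfedges W) = comp v" using W_of[OF v] by blast
  define P :: "'h \<times> 'h \<Rightarrow> bool" where "P = (\<lambda>p. eps (fst p) = v)"
  have "length (filter P W) = 2" using filter_two[OF v W] unfolding P_def .
  then obtain p1 p2 where fp: "filter P W = [p1, p2]"
    by (auto simp: numeral_2_eq_2 length_Suc_conv)
  obtain A vs where A: "W = A @ p1 # vs" "\<forall>u\<in>set A. \<not> P u" "P p1" "[p2] = filter P vs"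
    using filter_eq_ConsD[OF fp] by blast
  obtain B Cc where B: "vs = B @ p2 # Cc" "\<forall>u\<in>set B. \<not> P u" "P p2" "[] = filter P Cc"
    using filter_eq_ConsD[OF A(4)[symmetric]] by blast
  have Cc: "\<forall>u\<in>set Cc. \<not> P u" using B(4) by (metis filter_empty_conv)
  have Wd: "W = A @ p1 # B @ p2 # Cc" using A B by simp
  have dW: "distinct W" using W_distinct[OF W(1)] .
  have inW: "set A \<subseteq> set W" "set B \<subseteq> set W" "set Cc \<subseteq> set W" "p1 \<in> set W" "p2 \<in> set W"
    unfolding Wd by auto
  have disj: "set (p1 # B) \<inter> set (p2 # Cc @ A) = {}" using dW unfolding Wd by auto
  define Z1 where "Z1 = (fst p2, snd p1) # B"
  define Z2 where "Z2 = (fst p1, snd p2) # (Cc @ A)"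
  have rot1: "rotate (length A) W = p1 # B @ p2 # (Cc @ A)"
    unfolding Wd by (simp add: rotate_append)
  have rot2: "rotate (length (A @ p1 # B)) W = p2 # (Cc @ A) @ p1 # B"
  proof -
    have "W = (A @ p1 # B) @ (p2 # Cc)" unfolding Wd by simp
    then have "rotate (length (A @ p1 # B)) W = (p2 # Cc) @ (A @ p1 # B)" by (simp only: rotate_append)
    then show ?thesis by simp
  qed
  have hcomp: "sc v (eps h)" if "h = fst p \<or> h = snd p" "p \<in> set W" for h p
  proof -
    have "h \<in> set (walk_halfedges W)" using that unfolding set_walk_halfedges by auto
    then show ?thesis using W(2) unfolding comp_halfedges_def by auto
  qed
  have not_both: "\<not> ((\<exists>b\<in>Eb. b \<in> walk_edges Z1) \<and> (\<exists>b\<in>Eb. b \<in> walk_edges Z2))"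
  proof
    assume "(\<exists>b\<in>Eb. b \<in> walk_edges Z1) \<and> (\<exists>b\<in>Eb. b \<in> walk_edges Z2)"
    then obtain b1 b2 where b: "b1 \<in> Eb" "b1 \<in> walk_edges Z1" "b2 \<in> Eb" "b2 \<in> walk_edges Z2" by blast
    obtain i where i: "i < length Z1" "b1 = walk_edge Z1 i" using b(2) unfolding walk_edges_def by blast
    obtain i' where i': "i' < length Z2" "b2 = walk_edge Z2 i'" using b(4) unfolding walk_edges_def by blast
    define a1 where "a1 = (p1 # B) ! i"
    define c1 where "c1 = (B @ [p2]) ! i"
    define a2 where "a2 = (p2 # (Cc @ A)) ! i'"
    define c2 where "c2 = ((Cc @ A) @ [p1]) ! i'"
    have a1: "a1 \<in> set (p1 # B)" unfolding a1_def using i(1) unfolding Z1_def by (intro nth_mem) simp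
    have "c1 \<in> set (B @ [p2])" unfolding c1_def using i(1) unfolding Z1_def by (intro nth_mem) simp
    then have c1: "c1 \<in> set W" using inW by auto
    have a2: "a2 \<in> set (p2 # Cc @ A)" unfolding a2_def using i'(1) unfolding Z2_def by (intro nth_mem) simp
    have "c2 \<in> set ((Cc @ A) @ [p1])" unfolding c2_def using i'(1) unfolding Z2_def by (intro nth_mem) simp
    then have c2: "c2 \<in> set W" using inW by auto
    have a1W: "a1 \<in> set W" using a1 inW by auto
    have a2W: "a2 \<in> set W" using a2 inW by auto
    have e1: "b1 = {snd a1, fst c1}" using seg_walk_edge[OF Z1_def i(1)] i(2) unfolding a1_def c1_def by simp
    have e2: "b2 = {snd a2, fst c2}" using seg_walk_edge[OF Z2_def i'(1)] i'(2) unfolding a2_def c2_def by simp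
    have s1: "\<forall>h\<in>b1. sc v (eps h)" using e1 hcomp[OF _ a1W] hcomp[OF _ c1] by blast
    have s2: "\<forall>h\<in>b2. sc v (eps h)" using e2 hcomp[OF _ a2W] hcomp[OF _ c2] by blast
    have "b1 = b2" using base_uniq[OF v b(1) b(3) s1 s2] .
    then have "snd a1 \<in> {snd a2, fst c2}" using e1 e2 by auto
    moreover have "snd a1 \<noteq> fst c2" using trs_cross[OF W(1) W(1) c2 a1W] by auto
    ultimately have "snd a1 = snd a2" by auto
    then have "a1 = a2" using trs_cross[OF W(1) W(1) a1W a2W] by auto
    then show False using a1 a2 disj by auto
  qed
  have common: "W \<in> C \<and> set (walk_halfedges W) = comp v \<and> eps (fst p1) = v \<and> eps (fst p2) = v"
    using W A(3) B(3) unfolding P_def by simp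
  show ?thesis
  proof (cases "\<exists>b\<in>Eb. b \<in> walk_edges Z1")
    case False
    have "induced_circuit H E eps Eb C v Z1"
      unfolding induced_circuit_def
      apply (rule bexI[of _ W])
       apply (rule conjI)
      using common apply simp
       apply (rule exI[of _ "length A"], rule exI[of _ p1], rule exI[of _ B], rule exI[of _ p2], rule exI[of _ "Cc @ A"])
      using rot1 common A(2) B(2) Cc False unfolding P_def Z1_def by auto
    then show ?thesis by blast
  next
    case True
    then have F: "\<not> (\<exists>b\<in>Eb. b \<in> walk_edges Z2)" using not_both by blast
    have "induced_circuit H E eps Eb C v Z2"
      unfolding induced_circuit_def
      apply (rule bexI[of _ W])
       apply (rule conjI)
      using common apply simp
       apply (rule exI[of _ "length (A @ p1 # B)"], rule exI[of _ p2], rule exI[of _ "Cc @ A"], rule exI[of _ p1], rule exI[of _ B])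
      using rot2 common A(2) B(2) Cc F unfolding P_def Z2_def by auto
    then show ?thesis by blast
  qed
qed

lemma Z_ic: "v \<in> V \<Longrightarrow> induced_circuit H E eps Eb C v (Z v)"
  unfolding Gamma_EC_def using induced_ex by (rule someI_ex)

definition icw where "icw v W k p1 X p2 Y \<longleftrightarrow> W \<in> C \<and> set (walk_halfedges W) = comp v \<and>
  rotate k W = p1 # X @ p2 # Y \<and> eps (fst p1) = v \<and> eps (fst p2) = v \<and>
  (\<forall>p\<in>set X \<union> set Y. eps (fst p) \<noteq> v) \<and> Z v = (fst p2, snd p1) # X \<and> (\<forall>e\<in>Eb. e \<notin> walk_edges (Z v))"

lemma Z_icw: "v \<in> V \<Longrightarrow> \<exists>W k p1 X p2 Y. icw v W k p1 X p2 Y"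
proof -
  assume v: "v \<in> V"
  have "induced_circuit H E eps Eb C v (Z v)" using Z_ic[OF v] .
  then obtain W k p1 X p2 Y where "W \<in> C" "set (walk_halfedges W) = comp v"
    "rotate k W = p1 # X @ p2 # Y" "eps (fst p1) = v" "eps (fst p2) = v"
    "\<forall>p\<in>set X \<union> set Y. eps (fst p) \<noteq> v" "Z v = (fst p2, snd p1) # X"
    "\<forall>e\<in>Eb. e \<notin> walk_edges (Z v)"
    unfolding induced_circuit_def by blast
  then have "icw v W k p1 X p2 Y" unfolding icw_def by simp
  then show ?thesis by blast
qed

lemma icw_facts:
  assumes "icw v W k p1 X p2 Y"
  shows "W \<in> C" "p1 \<in> set W" "p2 \<in> set W" "set X \<subseteq> set W" "p1 \<noteq> p2"
    "\<forall>i<length (Z v). walk_edge (Z v) i \<in> E"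
    "\<forall>p\<in>set (Z v). fst p \<in> H \<and> snd p \<in> H \<and> eps (fst p) = eps (snd p)"
    "\<forall>b\<in>Eb. sigma tail (Z v) b = 0"
    "Z v = (fst p2, snd p1) # X" "eps (fst p1) = v" "eps (fst p2) = v" "\<forall>p\<in>set X. eps (fst p) \<noteq> v"
proof -
  note a = assms[unfolded icw_def]
  define R where "R = rotate k W"
  have R: "R = p1 # X @ p2 # Y" using a R_def by simp
  have sR: "set R = set W" unfolding R_def by simp
  have "distinct W" using W_distinct a by simp
  then have dR: "distinct R" unfolding R_def by simp
  show W: "W \<in> C" using a by simp
  show p1: "p1 \<in> set W" and p2: "p2 \<in> set W" and X: "set X \<subseteq> set W" using sR R by auto
  show "p1 \<noteq> p2" using dR R by auto
  show Zv: "Z v = (fst p2, snd p1) # X" using a by simp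
  show "eps (fst p1) = v" "eps (fst p2) = v" "\<forall>p\<in>set X. eps (fst p) \<noteq> v" using a by auto
  have cwR: "closed_walk H E eps R" unfolding R_def using closed_walk_rotate W_cw[OF W] by blast
  show "\<forall>i<length (Z v). walk_edge (Z v) i \<in> E"
  proof (intro allI impI)
    fix i assume i: "i < length (Z v)"
    have "walk_edge (Z v) i = walk_edge R i" using seg_walk_edge_R[OF Zv i R] .
    moreover have "i < length R" using i Zv R by simp
    ultimately show "walk_edge (Z v) i \<in> E" using cwR unfolding closed_walk_def by simp
  qed
  show "\<forall>p\<in>set (Z v). fst p \<in> H \<and> snd p \<in> H \<and> eps (fst p) = eps (snd p)"
  proof
    fix p assume p: "p \<in> set (Z v)"
    show "fst p \<in> H \<and> snd p \<in> H \<and> eps (fst p) = eps (snd p)"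
    proof (cases "p \<in> set X")
      case True
      then show ?thesis using trs_basic[OF W] X by blast
    next
      case False
      then have "p = (fst p2, snd p1)" using p Zv by simp
      then show ?thesis using trs_basic[OF W p1] trs_basic[OF W p2] a by simp
    qed
  qed
  show "\<forall>b\<in>Eb. sigma tail (Z v) b = 0"
  proof
    fix b assume b: "b \<in> Eb"
    then have "b \<notin> walk_edges (Z v)" using a by blast
    then have "\<forall>i<length (Z v). walk_edge (Z v) i \<noteq> b" unfolding walk_edges_def by blast
    then show "sigma tail (Z v) b = 0" unfolding sigma_def by (intro sum.neutral) auto
  qed
qed

lemma pair_formula:
  assumes ne: "Zz \<noteq> []" and we: "\<forall>i<length Zz. walk_edge Zz i \<in> E"
  shows "(\<Sum>e\<in>E. of_int (sigma tail Zz e) * dl tail f e) = (\<Sum>i<length Zz. f (snd (Zz!i)) - f (fst (Zz!i)))"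
proof -
  let ?L = "length Zz"
  let ?s = "\<lambda>i e. (if snd (Zz ! i) = tail e then 1 else -1) :: rat"
  have edge: "?s i (walk_edge Zz i) * dl tail f (walk_edge Zz i) = f (snd (Zz!i)) - f (fst (Zz ! (Suc i mod ?L)))"
    if i: "i < ?L" for i
  proof -
    define e where "e = walk_edge Zz i"
    define x where "x = snd (Zz!i)"
    define y where "y = fst (Zz ! (Suc i mod ?L))"
    have eE: "e \<in> E" using we i unfolding e_def by simp
    have exy: "e = {x, y}" unfolding e_def x_def y_def walk_edge_def by simp
    have "x \<noteq> y" using E_card[OF eE] exy by (cases "x = y") auto
    note ef = edge_form[OF eE]
    show ?thesis
    proof (cases "x = tail e")
      case True
      then have "hd e = y" using ef exy by auto
      then show ?thesis using True unfolding e_def[symmetric] x_def[symmetric] y_def[symmetric] dl_def by simp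
    next
      case False
      then have "tail e = y" "hd e = x" using ef exy by auto
      then show ?thesis using False unfolding e_def[symmetric] x_def[symmetric] y_def[symmetric] dl_def by simp
    qed
  qed
  have "(\<Sum>e\<in>E. of_int (sigma tail Zz e) * dl tail f e)
      = (\<Sum>e\<in>E. \<Sum>i<?L. (if walk_edge Zz i = e then ?s i e * dl tail f e else 0))"
    unfolding sigma_def of_int_sum sum_distrib_right by (intro sum.cong refl) auto
  also have "\<dots> = (\<Sum>i<?L. \<Sum>e\<in>E. (if walk_edge Zz i = e then ?s i e * dl tail f e else 0))"
    by (rule sum.swap)
  also have "\<dots> = (\<Sum>i<?L. ?s i (walk_edge Zz i) * dl tail f (walk_edge Zz i))"
    using we finE by (intro sum.cong refl) (simp add: sum.delta)
  also have "\<dots> = (\<Sum>i<?L. f (snd (Zz!i)) - f (fst (Zz ! (Suc i mod ?L))))"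
    using edge by (intro sum.cong) auto
  also have "\<dots> = (\<Sum>i<?L. f (snd (Zz!i))) - (\<Sum>i<?L. f (fst (Zz ! (Suc i mod ?L))))"
    by (simp add: sum_subtractf)
  also have "(\<Sum>i<?L. f (fst (Zz ! (Suc i mod ?L)))) = (\<Sum>i<?L. f (fst (Zz ! i)))"
    using sum_shift_mod[of ?L "\<lambda>i. f (fst (Zz ! i))"] ne by simp
  finally show ?thesis by (simp add: sum_subtractf)
qed

end

context eul
begin

definition phi where "phi w = (SOME s. \<exists>W k p1 X p2 Y. icw w W k p1 X p2 Y \<and> s = {fst p1, snd p1})"

lemma phi_spec: "w \<in> V \<Longrightarrow> \<exists>W k p1 X p2 Y. icw w W k p1 X p2 Y \<and> phi w = {fst p1, snd p1}"
proof -
  assume w: "w \<in> V"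
  have "\<exists>s. \<exists>W k p1 X p2 Y. icw w W k p1 X p2 Y \<and> s = {fst p1, snd p1}" using Z_icw[OF w] by blast
  then show ?thesis unfolding phi_def by (rule someI_ex)
qed

lemma phi_sub: "w \<in> V \<Longrightarrow> phi w \<subseteq> hv w"
proof -
  assume w: "w \<in> V"
  obtain W k p1 X p2 Y where i: "icw w W k p1 X p2 Y" "phi w = {fst p1, snd p1}" using phi_spec[OF w] by blast
  have "fst p1 \<in> H \<and> snd p1 \<in> H \<and> eps (fst p1) = eps (snd p1)"
    using trs_basic[OF icw_facts(1,2)[OF i(1)]] by blast
  then show ?thesis using i icw_facts(10)[OF i(1)] unfolding halfedges_at_def by auto
qed

lemma Zv_pair:
  assumes v: "v \<in> V"
  shows "(\<Sum>e\<in>E. of_int (sigma tail (Z v) e) * dl tail f e) = (\<Sum>i<length (Z v). f (snd (Z v ! i)) - f (fst (Z v ! i)))"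
proof -
  obtain W k p1 X p2 Y where i: "icw v W k p1 X p2 Y" using Z_icw[OF v] by blast
  show ?thesis
    by (rule pair_formula) (use icw_facts(6,9)[OF i] in auto)
qed

lemma sum_cons_nth:
  fixes g :: "'a \<Rightarrow> rat"
  shows "(\<Sum>i<length (z # X). g ((z # X) ! i)) = g z + (\<Sum>i<length X. g (X ! i))"
  unfolding length_Cons sum.lessThan_Suc_shift by simp

lemma Mphi:
  assumes v: "v \<in> V" and w: "w \<in> V"
  shows "(\<Sum>e\<in>E. of_int (sigma tail (Z v) e) * dl tail (ind (phi w)) e) = (if v = w then 1 else 0)"
proof -
  obtain W' k' q1 X' q2 Y' where iw: "icw w W' k' q1 X' q2 Y'" "phi w = {fst q1, snd q1}"
    using phi_spec[OF w] by blast
  note fw = icw_facts[OF iw(1)]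
  define s where "s = phi w"
  have s_hv: "s \<subseteq> hv w" unfolding s_def using phi_sub[OF w] .
  define g where "g = (\<lambda>p. ind s (snd p) - ind s (fst p))"
  have "(\<Sum>e\<in>E. of_int (sigma tail (Z v) e) * dl tail (ind (phi w)) e) = (\<Sum>i<length (Z v). g (Z v ! i))"
    unfolding Zv_pair[OF v] g_def s_def ..
  also have "\<dots> = (if v = w then 1 else 0)"
  proof (cases "v = w")
    case True
    have Zv: "Z v = (fst q2, snd q1) # X'" using fw(9) True by simp
    have "fst q2 \<noteq> fst q1" using trs_cross[OF fw(1) fw(1) fw(3) fw(2)] fw(5) by auto
    moreover have "fst q2 \<noteq> snd q1" using trs_cross[OF fw(1) fw(1) fw(3) fw(2)] by auto
    ultimately have g0: "g (fst q2, snd q1) = 1" unfolding g_def s_def iw(2) ind_def by auto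
    have gX: "g x = 0" if x: "x \<in> set X'" for x
    proof -
      have xW: "x \<in> set W'" using fw(4) x by auto
      have "eps (fst x) \<noteq> w" using fw(12) x by auto
      moreover have "eps (snd x) = eps (fst x)" using trs_basic[OF fw(1) xW] by simp
      ultimately have "fst x \<notin> s" "snd x \<notin> s" using s_hv unfolding halfedges_at_def by auto
      then show ?thesis unfolding g_def ind_def by simp
    qed
    have "(\<Sum>i<length X'. g (X' ! i)) = 0" using gX by (intro sum.neutral) auto
    then show ?thesis unfolding Zv sum_cons_nth using g0 True by simp
  next
    case False
    obtain W k p1 X p2 Y where iv: "icw v W k p1 X p2 Y" using Z_icw[OF v] by blast
    note fv = icw_facts[OF iv]
    have "eps (fst p2) = v" "eps (snd p1) = v" using fv(10,11) trs_basic[OF fv(1) fv(2)] by auto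
    then have "fst p2 \<notin> s" "snd p1 \<notin> s" using s_hv False unfolding halfedges_at_def by auto
    then have g0: "g (fst p2, snd p1) = 0" unfolding g_def ind_def by simp
    have gX: "g x = 0" if x: "x \<in> set X" for x
    proof -
      have xW: "x \<in> set W" using fv(4) x by auto
      note cr = trs_cross[OF fv(1) fw(1) xW fw(2)]
      have "snd x \<in> s \<longleftrightarrow> x = q1" unfolding s_def iw(2)
        using cr trs_cross[OF fw(1) fv(1) fw(2) xW] by auto
      moreover have "fst x \<in> s \<longleftrightarrow> x = q1" unfolding s_def iw(2)
        using cr trs_cross[OF fw(1) fv(1) fw(2) xW] by auto
      ultimately show ?thesis unfolding g_def ind_def by simp
    qed
    have "(\<Sum>i<length X. g (X ! i)) = 0" using gX by (intro sum.neutral) auto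
    then show ?thesis unfolding fv(9) sum_cons_nth using g0 False by simp
  qed
  finally show ?thesis .
qed

definition tw where "tw w = (THE t. t \<in> T \<and> transition_at H eps w t)"

lemma tw_spec: "w \<in> V \<Longrightarrow> tw w \<in> T \<and> transition_at H eps w (tw w)"
proof -
  assume w: "w \<in> V"
  have "\<exists>!t. t \<in> T \<and> transition_at H eps w t" using TV w unfolding transversal_def by blast
  then show ?thesis unfolding tw_def by (rule theI')
qed

lemma ori_sub: "w \<in> V \<Longrightarrow> ori (tw w) \<subseteq> hv w"
proof -
  assume w: "w \<in> V"
  have t: "tw w \<in> T" "transition_at H eps w (tw w)" using tw_spec[OF w] by auto
  have "tw w \<in> transitions V H eps" using t(1) TV unfolding transversal_def by auto
  then have "ori (tw w) \<in> tw w" using TO unfolding transitional_orientation_def by blast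
  moreover obtain s1 s2 where "tw w = {s1, s2}" "s1 \<union> s2 = hv w" using t(2) unfolding transition_at_def by blast
  ultimately show ?thesis by auto
qed

lemma card_E: "card E = 2 * card V"
proof -
  have H1: "H = (\<Union>w\<in>V. hv w)" using epsV unfolding halfedges_at_def by auto
  have "card (\<Union>w\<in>V. hv w) = (\<Sum>w\<in>V. card (hv w))"
  proof (rule card_UN_disjoint)
    show "finite V" by (rule finV)
    show "\<forall>i\<in>V. finite (hv i)" using finite_subset[OF hv_sub finH] by blast
    show "\<forall>i\<in>V. \<forall>j\<in>V. i \<noteq> j \<longrightarrow> hv i \<inter> hv j = {}" using hv_disj by blast
  qed
  also have "\<dots> = (\<Sum>w\<in>V. 4)" using hv_card by (intro sum.cong) auto
  finally have c1: "card H = 4 * card V" using H1 by simp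
  have H2: "H = \<Union>E"
  proof
    show "H \<subseteq> \<Union>E" using H_ex1 by blast
    show "\<Union>E \<subseteq> H" using E_sub by blast
  qed
  have "card (\<Union>E) = sum card E"
  proof (rule card_Union_disjoint)
    show "pairwise disjnt E"
    proof (rule pairwiseI)
      fix e1 e2 assume e: "e1 \<in> E" "e2 \<in> E" "e1 \<noteq> e2"
      show "disjnt e1 e2"
      proof (rule ccontr)
        assume "\<not> disjnt e1 e2"
        then obtain h where h: "h \<in> e1" "h \<in> e2" unfolding disjnt_def by blast
        then have "h \<in> H" using E_sub e by blast
        then have "\<exists>!e. e \<in> E \<and> h \<in> e" by (rule H_ex1)
        then show False using e h by blast
      qed
    qed
    show "\<And>A. A \<in> E \<Longrightarrow> finite A"
    proof -
      fix A assume "A \<in> E"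
      then have "A \<subseteq> H" by (rule E_sub)
      then show "finite A" using finH by (rule finite_subset)
    qed
  qed
  also have "\<dots> = (\<Sum>e\<in>E. 2)" using E_card by (intro sum.cong) auto
  finally have c2: "card H = 2 * card E" using H2 by simp
  show ?thesis using c1 c2 by simp
qed

definition rho where "rho = (\<lambda>b. eps (tail b)) ` Eb"

lemma tail_H: "e \<in> E \<Longrightarrow> tail e \<in> H"
proof -
  assume e: "e \<in> E"
  have "tail e \<in> e" using edge_form[OF e] by simp
  then show ?thesis using E_sub[OF e] by (rule subsetD[rotated])
qed
lemma hd_H: "e \<in> E \<Longrightarrow> hd e \<in> H"
proof -
  assume e: "e \<in> E"
  have "hd e \<in> e" using edge_form[OF e] by simp
  then show ?thesis using E_sub[OF e] by (rule subsetD[rotated])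
qed

lemma inj_rho: "inj_on (\<lambda>b. eps (tail b)) Eb"
proof (rule inj_onI)
  fix b1 b2 assume b: "b1 \<in> Eb" "b2 \<in> Eb" "eps (tail b1) = eps (tail b2)"
  have bE: "b1 \<in> E" "b2 \<in> E" using b Eb_sub by auto
  define x where "x = eps (tail b1)"
  have x: "x \<in> V" unfolding x_def using epsV tail_H bE by simp
  have s: "\<forall>h\<in>b. sc x (eps h)" if "b \<in> E" "eps (tail b) = x" for b
  proof
    fix h assume h: "h \<in> b"
    have tb: "tail b \<in> b" using edge_form[OF that(1)] by simp
    have "sc (eps (tail b)) (eps h)" by (rule sc_adj[OF that(1) tb h])
    then show "sc x (eps h)" using that(2) by simp
  qed
  have s1: "\<forall>h\<in>b1. sc x (eps h)" using s[OF bE(1)] unfolding x_def by simp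
  have s2: "\<forall>h\<in>b2. sc x (eps h)" using s[OF bE(2)] b(3) unfolding x_def by simp
  show "b1 = b2" by (rule base_uniq[OF x b(1) b(2) s1 s2])
qed

lemma rho_sub: "rho \<subseteq> V"
proof
  fix x assume "x \<in> rho"
  then obtain b where b: "b \<in> Eb" "x = eps (tail b)" unfolding rho_def by blast
  then have "b \<in> E" using Eb_sub by blast
  then show "x \<in> V" using b epsV tail_H by simp
qed

lemma finEb: "finite Eb" using Eb_sub finE by (rule finite_subset)

lemma card_rho: "card rho = card Eb" unfolding rho_def by (rule card_image[OF inj_rho])

lemma in_W_vert:
  assumes "W \<in> C" "h \<in> set (walk_halfedges W)"
  shows "\<exists>j<length W. eps (fst (W ! j)) = eps h"
proof -
  obtain p where p: "p \<in> set W" "h = fst p \<or> h = snd p" using assms(2) unfolding set_walk_halfedges by auto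
  obtain j where j: "j < length W" "W ! j = p" using p(1) by (metis in_set_conv_nth)
  have "eps (fst p) = eps (snd p)" using trs_basic[OF assms(1) p(1)] by simp
  then show ?thesis using j p by auto
qed

lemma walk_edge_inj:
  assumes W: "W \<in> C" and ij: "i < length W" "j < length W" "walk_edge W i = walk_edge W j"
  shows "i = j"
proof -
  have L: "0 < length W" using ij by linarith
  have mi: "W ! i \<in> set W" "W ! j \<in> set W" "W ! (Suc j mod length W) \<in> set W" using ij L by auto
  have "snd (W ! i) \<in> walk_edge W i" unfolding walk_edge_def by simp
  then have "snd (W ! i) \<in> walk_edge W j" using ij(3) by simp
  then have "snd (W ! i) \<in> {snd (W ! j), fst (W ! (Suc j mod length W))}"
    unfolding walk_edge_def by simp
  moreover have "snd (W ! i) \<noteq> fst (W ! (Suc j mod length W))"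
    using trs_cross[OF W W mi(3) mi(1)] by auto
  ultimately have "snd (W ! i) = snd (W ! j)" by auto
  then have "W ! i = W ! j" using trs_cross[OF W W mi(1) mi(2)] by auto
  then show ?thesis using W_distinct[OF W] ij nth_eq_iff_index_eq by blast
qed

lemma indep:
  fixes lam :: "'v \<Rightarrow> rat"
  assumes ed: "\<And>e. e \<in> E - Eb \<Longrightarrow> lam (eps (tail e)) = lam (eps (hd e))"
    and bz: "\<And>b. b \<in> Eb \<Longrightarrow> lam (eps (tail b)) = 0"
    and v: "v \<in> V"
  shows "lam v = 0"
proof -
  obtain W where W: "W \<in> C" "set (walk_halfedges W) = comp v" using W_of[OF v] by blast
  define L where "L = length W"
  have L: "0 < L" using C_circ[OF W(1)] unfolding oriented_circuit_def L_def by auto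
  define vert where "vert i = eps (fst (W ! i))" for i
  have we: "walk_edge W i \<in> E" if "i < L" for i using W_cw[OF W(1)] that unfolding closed_walk_def L_def by blast
  have wec: "\<forall>h\<in>walk_edge W i. sc v (eps h)" if "i < L" for i
  proof
    fix h assume h: "h \<in> walk_edge W i"
    have "W ! i \<in> set W" "W ! (Suc i mod length W) \<in> set W" using that L unfolding L_def by auto
    then have "h \<in> set (walk_halfedges W)" using h unfolding walk_edge_def set_walk_halfedges by auto
    then show "sc v (eps h)" using W(2) unfolding comp_halfedges_def by auto
  qed
  have ex_i0: "\<exists>i0<L. \<forall>i<L. i \<noteq> i0 \<longrightarrow> walk_edge W i \<notin> Eb"
  proof (cases "\<exists>i0<L. walk_edge W i0 \<in> Eb")
    case True
    then obtain i0 where i0: "i0 < L" "walk_edge W i0 \<in> Eb" by blast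
    have "\<forall>i<L. i \<noteq> i0 \<longrightarrow> walk_edge W i \<notin> Eb"
    proof (intro allI impI)
      fix i assume that: "i < L" "i \<noteq> i0"
      show "walk_edge W i \<notin> Eb"
      proof
        assume wi: "walk_edge W i \<in> Eb"
        have "walk_edge W i = walk_edge W i0"
          by (rule base_uniq[OF v wi i0(2) wec[OF that(1)] wec[OF i0(1)]])
        then have "i = i0" using walk_edge_inj[OF W(1), of i i0] that(1) i0(1) unfolding L_def by blast
        then show False using that(2) by simp
      qed
    qed
    then show ?thesis using i0(1) by blast
  next
    case False
    then have "\<forall>i<L. i \<noteq> 0 \<longrightarrow> walk_edge W i \<notin> Eb" by blast
    then show ?thesis using L by blast
  qed
  then obtain i0 where i0: "i0 < L" "\<And>i. i < L \<Longrightarrow> i \<noteq> i0 \<Longrightarrow> walk_edge W i \<notin> Eb" by blast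
  have step: "lam (vert i) = lam (vert (Suc i mod L))" if "i < L" "i \<noteq> i0" for i
  proof -
    define e where "e = walk_edge W i"
    have eE: "e \<in> E - Eb" using we i0(2) that unfolding e_def by blast
    have "W ! i \<in> set W" using that unfolding L_def by auto
    then have vi: "eps (snd (W ! i)) = vert i" using trs_basic[OF W(1)] unfolding vert_def by simp
    have exy: "e = {snd (W ! i), fst (W ! (Suc i mod L))}" unfolding e_def walk_edge_def L_def by simp
    have tl: "e = {tail e, hd e}" using edge_form[of e] eE by simp
    have "(snd (W ! i) = tail e \<and> fst (W ! (Suc i mod L)) = hd e) \<or> (snd (W ! i) = hd e \<and> fst (W ! (Suc i mod L)) = tail e)"
      using doubleton_eq_iff[of "snd (W ! i)" "fst (W ! (Suc i mod L))" "tail e" "hd e"] exy tl by simp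
    then have "lam (eps (snd (W ! i))) = lam (eps (fst (W ! (Suc i mod L))))"
      using ed[OF eE] by metis
    then show ?thesis using vi unfolding vert_def by simp
  qed
  have const: "\<And>i. i < L \<Longrightarrow> (lam \<circ> vert) i = (lam \<circ> vert) (Suc i0 mod L)"
    by (rule cyc_const[OF L i0(1)]) (use step in auto)
  have "hv v \<noteq> {}"
  proof
    assume "hv v = {}"
    then have "card (hv v) = 0" by simp
    then show False using hv_card[OF v] by simp
  qed
  then obtain h where h: "h \<in> hv v" by blast
  then have "h \<in> set (walk_halfedges W)" using comp_hv[OF v] W(2) by blast
  then obtain j where j: "j < L" "eps (fst (W ! j)) = eps h" using in_W_vert[OF W(1)] unfolding L_def by blast
  have "eps h = v" using h unfolding halfedges_at_def by simp
  then have j2: "vert j = v" using j unfolding vert_def by simp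
  obtain b where b: "b \<in> Eb" "\<forall>h\<in>b. sc v (eps h)" using base_ex[OF v] by blast
  have bE: "b \<in> E" using b Eb_sub by auto
  have tb: "tail b \<in> b" using edge_form[OF bE] by simp
  have "tail b \<in> comp v" using tail_H[OF bE] b(2) tb unfolding comp_halfedges_def by blast
  then have "tail b \<in> set (walk_halfedges W)" using W(2) by simp
  then obtain j' where j': "j' < L" "vert j' = eps (tail b)" using in_W_vert[OF W(1)] unfolding vert_def L_def by blast
  have "lam v = lam (vert j)" using j2 by simp
  also have "\<dots> = lam (vert j')" using const[OF j(1)] const[OF j'(1)] unfolding comp_def by argo
  also have "\<dots> = 0" using bz[OF b(1)] j' by simp
  finally show ?thesis .
qed

lemma Delta_gen:
  assumes "e = {a, b}" "a \<noteq> b"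
  shows "(if e \<inter> s = {a} then 1 else if e \<inter> s = {b} then -1 else 0) = ind s a - (ind s b :: rat)"
  using assms by (cases "a \<in> s"; cases "b \<in> s") (auto simp: ind_def doubleton_eq_iff)

lemma Delta_dl:
  assumes "e \<in> E"
  shows "Delta tail ori e t = dl tail (ind (ori t)) e"
proof -
  note ef = edge_form[OF assms]
  have ne: "tail e \<noteq> hd e" using ef by metis
  have ee: "e = {tail e, hd e}" using ef by metis
  show ?thesis unfolding Delta_def dl_def using Delta_gen[OF ee ne, of "ori t"] by simp
qed

end

lemma dl_split:
  assumes "A \<subseteq> S"
  shows "dl tail (ind S) e = dl tail (ind A) e + dl tail (ind (S - A)) e"
  using assms unfolding dl_def ind_def by auto

lemma dl_vals: "dl tail (ind s) e \<in> {-1, 0, 1}"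
  unfolding dl_def ind_def by auto

lemma dl_one: "dl tail (ind s) e = 1 \<Longrightarrow> tail e \<in> s"
  unfolding dl_def ind_def by (auto split: if_splits)

lemma dl_mone: "dl tail (ind s) e = -1 \<Longrightarrow> head_of tail e \<in> s"
  unfolding dl_def ind_def by (auto split: if_splits)

lemma sum_nth_distinct:
  fixes F :: "'a \<Rightarrow> rat"
  assumes "distinct xs"
  shows "(\<Sum>j<length xs. F (xs ! j)) = sum F (set xs)"
proof -
  have "bij_betw ((!) xs) {..<length xs} (set xs)" using bij_betw_nth[OF assms] by simp
  then show ?thesis by (rule sum.reindex_bij_betw)
qed

context eul
begin

lemma sigma_Eb: "v \<in> V \<Longrightarrow> b \<in> Eb \<Longrightarrow> sigma tail (Z v) b = 0"
  using Z_icw icw_facts(8) by blast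

lemma Z_trans: "v \<in> V \<Longrightarrow> p \<in> set (Z v) \<Longrightarrow> fst p \<in> H \<and> snd p \<in> H \<and> eps (fst p) = eps (snd p)"
  using Z_icw icw_facts(7) by blast

lemma Z_div: "v \<in> V \<Longrightarrow> (\<Sum>e\<in>E. of_int (sigma tail (Z v) e) * dl tail (ind (hv u)) e) = 0"
proof -
  assume v: "v \<in> V"
  have "(\<Sum>e\<in>E. of_int (sigma tail (Z v) e) * dl tail (ind (hv u)) e)
     = (\<Sum>i<length (Z v). ind (hv u) (snd (Z v ! i)) - ind (hv u) (fst (Z v ! i)))"
    by (rule Zv_pair[OF v])
  also have "\<dots> = 0"
  proof (rule sum.neutral, rule ballI)
    fix i assume "i \<in> {..<length (Z v)}"
    then have "Z v ! i \<in> set (Z v)" by simp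
    then have "fst (Z v ! i) \<in> H \<and> snd (Z v ! i) \<in> H \<and> eps (fst (Z v ! i)) = eps (snd (Z v ! i))"
      using Z_trans[OF v] by blast
    then show "ind (hv u) (snd (Z v ! i)) - ind (hv u) (fst (Z v ! i)) = 0"
      unfolding ind_def halfedges_at_def by simp
  qed
  finally show ?thesis .
qed

theorem main: "det_on V (submatrix_T H eps T (CM_Delta H E eps Eb C tail ori)) \<in> {-1, 0, 1}"
proof -
  obtain vs where vs: "distinct vs" "set vs = V" using finite_distinct_list[OF finV] by metis
  define n where "n = length vs"
  define U where "U = V - rho"
  have finU: "finite U" unfolding U_def using finV by simp
  obtain us where us: "distinct us" "set us = U" using finite_distinct_list[OF finU] by metis
  define k where "k = length us"
  define E' where "E' = E - Eb"
  have finE': "finite E'" unfolding E'_def using finE by simp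
  obtain es where es: "distinct es" "set es = E'" using finite_distinct_list[OF finE'] by metis
  define m where "m = length es"
  have cV: "card V = n" unfolding n_def using distinct_card[OF vs(1)] vs(2) by simp
  have cU: "card U = k" unfolding k_def using distinct_card[OF us(1)] us(2) by simp
  have cE': "card E' = m" unfolding m_def using distinct_card[OF es(1)] es(2) by simp
  have finrho: "finite rho" using finV rho_sub finite_subset by auto
  have cU2: "card U = card V - card Eb" unfolding U_def using card_Diff_subset[OF finrho rho_sub] card_rho by simp
  have cE2: "card E' = card E - card Eb" unfolding E'_def using card_Diff_subset[OF finEb Eb_sub] by simp
  have le: "card Eb \<le> card V" using card_mono[OF finV rho_sub] card_rho by simp
  have mnk: "m = n + k" using cV cU cE' cU2 cE2 le card_E by simp
  have UV: "U \<subseteq> V" unfolding U_def by auto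
  have usV: "us ! l \<in> V" if "l < k" for l using that us UV unfolding k_def by auto
  have vsV: "vs ! r \<in> V" if "r < n" for r using that vs unfolding n_def by auto
  define idx where "idx l = (SOME r. r < n \<and> vs ! r = us ! l)" for l
  have idx: "idx l < n \<and> vs ! (idx l) = us ! l" if l: "l < k" for l
  proof -
    have "us ! l \<in> set vs" using usV[OF l] vs by simp
    then have "\<exists>r. r < n \<and> vs ! r = us ! l" unfolding n_def by (metis in_set_conv_nth)
    then show ?thesis unfolding idx_def by (rule someI_ex)
  qed
  define oo where "oo w = ori (tw w)" for w
  have oo_sub: "\<forall>w\<in>V. oo w \<subseteq> hv w" unfolding oo_def using ori_sub by blast
  have phi_sub': "\<forall>w\<in>V. phi w \<subseteq> hv w" using phi_sub by blast
  define Xf where "Xf r j = (of_int (sigma tail (Z (vs ! r)) (es ! j)) :: rat)" for r j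
  define Yf where "Yf j l = dl tail (ind (hv (us ! l))) (es ! j)" for j l
  define Kf where "Kf a j c = dl tail (ind (a (vs ! c))) (es ! j)" for a :: "'v \<Rightarrow> 'h set" and j c
  define Kcf where "Kcf a j l = dl tail (ind (hv (us ! l) - a (us ! l))) (es ! j)" for a :: "'v \<Rightarrow> 'h set" and j l
  have sumE: "(\<Sum>j<m. Xf r j * G (es ! j)) = (\<Sum>e\<in>E. of_int (sigma tail (Z (vs ! r)) e) * G e)"
    if r: "r < n" for r and G :: "'h set \<Rightarrow> rat"
  proof -
    have "(\<Sum>j<m. Xf r j * G (es ! j)) = (\<Sum>e\<in>E'. of_int (sigma tail (Z (vs ! r)) e) * G e)"
      unfolding Xf_def m_def using sum_nth_distinct[OF es(1), of "\<lambda>e. of_int (sigma tail (Z (vs ! r)) e) * G e"] es(2)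
      by simp
    also have "\<dots> = (\<Sum>e\<in>E. of_int (sigma tail (Z (vs ! r)) e) * G e)"
    proof (rule sum.mono_neutral_left[OF finE])
      show "E' \<subseteq> E" unfolding E'_def by auto
      show "\<forall>i\<in>E - E'. of_int (sigma tail (Z (vs ! r)) i) * G i = 0"
        using sigma_Eb[OF vsV[OF r]] unfolding E'_def by simp
    qed
    finally show ?thesis .
  qed
  have block: "det (mat m m (\<lambda>(r,j). if r < n then Xf r j else Yf j (r - n)))
       * det (mat m m (\<lambda>(j,c). if c < n then Kf a j c else Kcf a j (c - n)))
       = det (mat n n (\<lambda>(r,c). \<Sum>j<m. Xf r j * Kf a j c))
       * det (mat k k (\<lambda>(l,l'). \<Sum>j<m. Yf j l * Yf j l'))"
    if a: "\<forall>w\<in>V. a w \<subseteq> hv w" for a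
  proof (rule block_arg[OF mnk])
    show "\<And>l. l < k \<Longrightarrow> idx l < n" using idx by blast
    show "Yf j l = Kf a j (idx l) + Kcf a j l" if "j < m" "l < k" for j l
      unfolding Yf_def Kf_def Kcf_def using idx[OF that(2)] dl_split a usV[OF that(2)] by metis
    show "(\<Sum>j<m. Xf r j * Yf j l) = 0" if "r < n" "l < k" for r l
      unfolding Yf_def using sumE[OF that(1)] Z_div[OF vsV[OF that(1)]] by simp
  qed
  have tu: "det (mat m m (\<lambda>(j,c). if c < n then Kf a j c else Kcf a j (c - n))) \<in> {-1, 0, 1}"
    if a: "\<forall>w\<in>V. a w \<subseteq> hv w" for a
  proof -
    define cs where "cs c = (if c < n then a (vs ! c) else hv (us ! (c - n)) - a (us ! (c - n)))" for c
    define cv where "cv c = (if c < n then vs ! c else us ! (c - n))" for c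
    have ent: "mat m m (\<lambda>(j,c). if c < n then Kf a j c else Kcf a j (c - n)) $$ (j,c) = dl tail (ind (cs c)) (es ! j)"
      if "j < m" "c < m" for j c using that unfolding cs_def Kf_def Kcf_def by simp
    have cs_sub: "cs c \<subseteq> hv (cv c)" if "c < m" for c
    proof (cases "c < n")
      case True
      then show ?thesis using a vsV unfolding cs_def cv_def by auto
    next
      case False
      then show ?thesis unfolding cs_def cv_def by auto
    qed
    have disj: "cs c \<inter> cs c' = {}" if "c < m" "c' < m" "c \<noteq> c'" for c c'
    proof (cases "cv c = cv c'")
      case False
      then show ?thesis using cs_sub[OF that(1)] cs_sub[OF that(2)] hv_disj by blast
    next
      case True
      show ?thesis
      proof (cases "c < n"; cases "c' < n")
        assume "c < n" "c' < n"
        then have "vs ! c = vs ! c'" using True unfolding cv_def by simp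
        then have "c = c'" using \<open>c < n\<close> \<open>c' < n\<close> vs(1) nth_eq_iff_index_eq unfolding n_def by blast
        then show ?thesis using that by simp
      next
        assume h: "\<not> c < n" "\<not> c' < n"
        then have "us ! (c - n) = us ! (c' - n)" using True unfolding cv_def by simp
        moreover have "c - n < length us" "c' - n < length us" using h that mnk unfolding k_def by auto
        ultimately have "c - n = c' - n" using us(1) nth_eq_iff_index_eq by blast
        then have "c = c'" using h by simp
        then show ?thesis using that by simp
      next
        assume h: "c < n" "\<not> c' < n"
        then have "cs c = a (cv c)" "cs c' = hv (cv c) - a (cv c)" using True unfolding cs_def cv_def by auto
        then show ?thesis by auto
      next
        assume h: "\<not> c < n" "c' < n"
        then have "cs c' = a (cv c)" "cs c = hv (cv c) - a (cv c)" using True unfolding cs_def cv_def by auto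
        then show ?thesis by auto
      qed
    qed
    show ?thesis
    proof (rule tu_det)
      show "mat m m (\<lambda>(j,c). if c < n then Kf a j c else Kcf a j (c - n)) \<in> carrier_mat m m" by simp
      show "mat m m (\<lambda>(j,c). if c < n then Kf a j c else Kcf a j (c - n)) $$ (i, j) \<in> {- 1, 0, 1}"
        if "i < m" "j < m" for i j unfolding ent[OF that] by (rule dl_vals)
      show "j = j'" if "i < m" "j < m" "j' < m"
        "mat m m (\<lambda>(j,c). if c < n then Kf a j c else Kcf a j (c - n)) $$ (i, j) = 1"
        "mat m m (\<lambda>(j,c). if c < n then Kf a j c else Kcf a j (c - n)) $$ (i, j') = 1" for i j j'
      proof (rule ccontr)
        assume ne: "j \<noteq> j'"
        have "tail (es ! i) \<in> cs j" "tail (es ! i) \<in> cs j'"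
          using that(4,5) unfolding ent[OF that(1,2)] ent[OF that(1,3)] by (auto dest: dl_one)
        then show False using disj[OF that(2,3) ne] by blast
      qed
      show "j = j'" if "i < m" "j < m" "j' < m"
        "mat m m (\<lambda>(j,c). if c < n then Kf a j c else Kcf a j (c - n)) $$ (i, j) = -1"
        "mat m m (\<lambda>(j,c). if c < n then Kf a j c else Kcf a j (c - n)) $$ (i, j') = -1" for i j j'
      proof (rule ccontr)
        assume ne: "j \<noteq> j'"
        have "hd (es ! i) \<in> cs j" "hd (es ! i) \<in> cs j'"
          using that(4,5) unfolding ent[OF that(1,2)] ent[OF that(1,3)] by (auto dest: dl_mone)
        then show False using disj[OF that(2,3) ne] by blast
      qed
    qed
  qed
  have Mphi1: "mat n n (\<lambda>(r,c). \<Sum>j<m. Xf r j * Kf phi j c) = 1\<^sub>m n"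
  proof (rule eq_matI)
    fix r c assume rc: "r < dim_row (1\<^sub>m n :: rat mat)" "c < dim_col (1\<^sub>m n :: rat mat)"
    then have r: "r < n" and c: "c < n" by auto
    have "(\<Sum>j<m. Xf r j * Kf phi j c) = (\<Sum>e\<in>E. of_int (sigma tail (Z (vs ! r)) e) * dl tail (ind (phi (vs ! c))) e)"
      unfolding Kf_def using sumE[OF r] by simp
    also have "\<dots> = (if vs ! r = vs ! c then 1 else 0)" by (rule Mphi[OF vsV[OF r] vsV[OF c]])
    also have "\<dots> = (if r = c then 1 else 0)" using vs(1) r c nth_eq_iff_index_eq unfolding n_def by metis
    finally show "mat n n (\<lambda>(r,c). \<Sum>j<m. Xf r j * Kf phi j c) $$ (r,c) = 1\<^sub>m n $$ (r,c)"
      using r c by simp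
  qed auto
  define GG where "GG = mat k k (\<lambda>(l,l'). \<Sum>j<m. Yf j l * Yf j l')"
  have GG0: "det GG \<noteq> 0"
  proof
    assume "det GG = 0"
    moreover have GGc: "GG \<in> carrier_mat k k" unfolding GG_def by simp
    ultimately obtain x where x: "x \<in> carrier_vec k" "x \<noteq> 0\<^sub>v k" "GG *\<^sub>v x = 0\<^sub>v k"
      using det_0_iff_vec_prod_zero by blast
    define y where "y j = (\<Sum>l<k. Yf j l * x $ l)" for j
    have Gx: "(GG *\<^sub>v x) $ l = (\<Sum>j<m. Yf j l * y j)" if l: "l < k" for l
    proof -
      have "(GG *\<^sub>v x) $ l = (\<Sum>l'<k. GG $$ (l,l') * x $ l')"
        using l x(1) GGc by (simp add: mult_mat_vec_def scalar_prod_def lessThan_atLeast0)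
      also have "\<dots> = (\<Sum>l'<k. \<Sum>j<m. Yf j l * Yf j l' * x $ l')"
        using l unfolding GG_def by (simp add: sum_distrib_right)
      also have "\<dots> = (\<Sum>j<m. \<Sum>l'<k. Yf j l * (Yf j l' * x $ l'))"
        by (subst sum.swap) (simp add: mult.assoc)
      also have "\<dots> = (\<Sum>j<m. Yf j l * y j)" unfolding y_def by (simp add: sum_distrib_left)
      finally show ?thesis .
    qed
    have "0 = (\<Sum>l<k. x $ l * (GG *\<^sub>v x) $ l)" using x(3) by simp
    also have "\<dots> = (\<Sum>l<k. \<Sum>j<m. x $ l * Yf j l * y j)"
      using Gx by (simp add: sum_distrib_left mult.assoc)
    also have "\<dots> = (\<Sum>j<m. y j * y j)"
      unfolding y_def by (subst sum.swap) (simp add: sum_distrib_left sum_distrib_right mult.commute mult.left_commute)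
    finally have "(\<Sum>j<m. y j * y j) = 0" by simp
    then have y0: "\<forall>j\<in>{..<m}. y j * y j = 0"
      by (subst sum_nonneg_eq_0_iff[symmetric]) auto
    define ix where "ix w = (THE l. l < k \<and> us ! l = w)" for w
    have ix: "ix (us ! l) = l" if "l < k" for l
      unfolding ix_def using that us(1) nth_eq_iff_index_eq unfolding k_def by (intro the_equality) auto
    define lam where "lam w = (if w \<in> U then x $ (ix w) else 0)" for w
    have sl: "(\<Sum>l<k. (if us ! l = w then x $ l else 0)) = lam w" for w
    proof (cases "w \<in> U")
      case True
      then obtain l0 where l0: "l0 < k" "us ! l0 = w" using us unfolding k_def by (metis in_set_conv_nth)
      have "(\<Sum>l<k. (if us ! l = w then x $ l else 0)) = x $ l0"
      proof -
        have "(\<Sum>l<k. (if us ! l = w then x $ l else 0)) = (\<Sum>l<k. (if l = l0 then x $ l else 0))"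
          using l0 us(1) nth_eq_iff_index_eq unfolding k_def by (intro sum.cong) auto
        also have "\<dots> = x $ l0" using l0 by simp
        finally show ?thesis .
      qed
      then show ?thesis unfolding lam_def using True ix[OF l0(1)] l0 by simp
    next
      case False
      then have "\<forall>l<k. us ! l \<noteq> w" using us unfolding k_def by auto
      then show ?thesis unfolding lam_def using False by simp
    qed
    have yj: "y j = lam (eps (tail (es ! j))) - lam (eps (hd (es ! j)))" if j: "j < m" for j
    proof -
      have ej: "es ! j \<in> E" using j es unfolding m_def E'_def by auto
      have "y j = (\<Sum>l<k. (if us ! l = eps (tail (es ! j)) then x $ l else 0))
                - (\<Sum>l<k. (if us ! l = eps (hd (es ! j)) then x $ l else 0))"
        unfolding y_def Yf_def dl_def ind_def halfedges_at_def sum_subtractf[symmetric]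
        using tail_H[OF ej] hd_H[OF ej] by (intro sum.cong) auto
      then show ?thesis using sl by simp
    qed
    have lam0: "lam v = 0" if v: "v \<in> V" for v
    proof (rule indep[OF _ _ v])
      fix e assume e: "e \<in> E - Eb"
      then obtain j where j: "j < m" "es ! j = e" using es unfolding m_def E'_def by (metis in_set_conv_nth)
      have "y j = 0" using y0 j by simp
      then show "lam (eps (tail e)) = lam (eps (hd e))" using yj[OF j(1)] j by simp
    next
      fix b assume "b \<in> Eb"
      then have "eps (tail b) \<in> rho" unfolding rho_def by blast
      then show "lam (eps (tail b)) = 0" unfolding lam_def U_def by simp
    qed
    have "x = 0\<^sub>v k"
    proof (rule eq_vecI)
      fix l assume "l < dim_vec (0\<^sub>v k :: rat vec)"
      then have l: "l < k" by simp
      have "us ! l \<in> U" using l us unfolding k_def by auto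
      then have "lam (us ! l) = x $ l" unfolding lam_def using ix[OF l] by simp
      then show "x $ l = 0\<^sub>v k $ l" using lam0[OF usV[OF l]] l by simp
    qed (use x(1) in simp)
    then show False using x(2) by simp
  qed
  define RR where "RR = mat m m (\<lambda>(r,j). if r < n then Xf r j else Yf j (r - n))"
  define KK where "KK a = mat m m (\<lambda>(j,c). if c < n then Kf a j c else Kcf a j (c - n))" for a
  define MA where "MA a = mat n n (\<lambda>(r,c). \<Sum>j<m. Xf r j * Kf a j c)" for a
  have b1: "det RR * det (KK oo) = det (MA oo) * det GG"
    using block[OF oo_sub] unfolding RR_def KK_def MA_def GG_def .
  have b2: "det RR * det (KK phi) = det GG"
    using block[OF phi_sub'] Mphi1 unfolding RR_def KK_def MA_def GG_def by simp
  have t1: "det (KK oo) \<in> {-1, 0, 1}" unfolding KK_def by (rule tu[OF oo_sub])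
  have t2: "det (KK phi) \<in> {-1, 0, 1}" unfolding KK_def by (rule tu[OF phi_sub'])
  have t2': "det (KK phi) * det (KK phi) = 1" using b2 GG0 t2 by auto
  have "det (MA oo) * det GG = det GG * (det (KK oo) * det (KK phi))"
  proof -
    have "det (MA oo) * det GG = det RR * det (KK oo) * (det (KK phi) * det (KK phi))"
      using b1 t2' by simp
    also have "\<dots> = (det RR * det (KK phi)) * (det (KK oo) * det (KK phi))" by (simp add: algebra_simps)
    finally show ?thesis using b2 by simp
  qed
  then have MAo: "det (MA oo) = det (KK oo) * det (KK phi)" using GG0 by simp
  have MAo_in: "det (MA oo) \<in> {-1, 0, 1}" unfolding MAo using t1 t2 by auto
  have bijvs: "bij_betw ((!) vs) {0..<n} V"
    using bij_betw_nth[OF vs(1)] vs(2) unfolding n_def by (simp add: atLeast0LessThan)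
  have conv: "det_on V (submatrix_T H eps T (CM_Delta H E eps Eb C tail ori))
      = det (mat n n (\<lambda>(i,j). submatrix_T H eps T (CM_Delta H E eps Eb C tail ori) (vs ! i) (vs ! j)))"
    by (rule det_on_conv[OF bijvs])
  have "mat n n (\<lambda>(i,j). submatrix_T H eps T (CM_Delta H E eps Eb C tail ori) (vs ! i) (vs ! j)) = MA oo"
  proof (rule eq_matI)
    fix i j assume ij: "i < dim_row (MA oo)" "j < dim_col (MA oo)"
    then have i: "i < n" and j: "j < n" unfolding MA_def by auto
    have "submatrix_T H eps T (CM_Delta H E eps Eb C tail ori) (vs ! i) (vs ! j)
        = (\<Sum>e\<in>E. of_int (sigma tail (Z (vs ! i)) e) * Delta tail ori e (tw (vs ! j)))"
      unfolding submatrix_T_def CM_Delta_def tw_def ..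
    also have "\<dots> = (\<Sum>e\<in>E. of_int (sigma tail (Z (vs ! i)) e) * dl tail (ind (oo (vs ! j))) e)"
      unfolding oo_def using Delta_dl by (intro sum.cong) auto
    also have "\<dots> = (\<Sum>l<m. Xf i l * Kf oo l j)" unfolding Kf_def using sumE[OF i] by simp
    finally show "mat n n (\<lambda>(i,j). submatrix_T H eps T (CM_Delta H E eps Eb C tail ori) (vs ! i) (vs ! j)) $$ (i,j)
        = MA oo $$ (i,j)" using i j unfolding MA_def by simp
  qed (auto simp: MA_def)
  then show ?thesis using conv MAo_in by simp
qed

end

theorem mainTheorem18:
  fixes V :: "'v set" and H :: "'h set" and E :: "'h set set" and eps :: "'h \<Rightarrow> 'v"
    and Eb :: "'h set set" and C :: "('h \<times> 'h) list set" and tail :: "'h set \<Rightarrow> 'h"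
    and ori :: "'h set set \<Rightarrow> 'h set" and T :: "'h set set set"
  assumes "is_graph V H E eps"
    and "four_regular V H eps"
    and "based V E eps Eb"
    and "oriented_euler_system V H E eps C"
    and "directed_version E tail"
    and "transitional_orientation V H eps ori"
    and "transversal V H eps T"
  shows "det_on V (submatrix_T H eps T (CM_Delta H E eps Eb C tail ori)) \<in> {-1, 0, 1}"
proof -
  interpret eul V H E eps Eb C tail ori T using assms by unfold_locales
  show ?thesis by (rule main)
qed

end
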